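(* Let $n\ge 3$, $m\ge 1$, $k\in\mathbb{N}$, let $f_{\mathfrak{e}_k}:\mathbb{S}^{n-1}\to\mathbb{S}^{2m-1}$ be an eigenmap with energy density $\mathfrak{e}_k=k(k+n-2)/2$, let $\Phi:[0,1]\to\mathbb{R}$ be $C^2$, $c\in\mathbb{R}$, and $g(r)=c\ln r$. Define $u:B^n\setminus\{0\}\to\mathbb{S}^{2m}$ by $$u(x)=\big(R_{g(r)}f_{\mathfrak{e}_k}(x/r)\sin\Phi(r),\ \cos\Phi(r)\big),\qquad r=|x|,$$ and let $\hat u$ equal $u$ on $B^n\setminus\{0\}$ and an arbitrary fixed point of $\mathbb{S}^{2m}$ at $x=0$. Then $\hat u\in H^1_2(B^n,\mathbb{R}^{2m+1})$.
   Context: For $t\in\mathbb{R}$, $D_t=\begin{pmatrix}\cos t&-\sin t\\ \sin t&\cos t\end{pmatrix}$ and $R_t\in\mathrm{Mat}(2m,\mathbb{R})$ is the block-diagonal matrix with $m$ diagonal $2\times2$ blocks equal to $D_t$ and zero elsewhere. An eigenmap is a smooth harmonic map $\mathbb{S}^{n-1}\to\mathbb{S}^{2m-1}$ with constant energy density (components are harmonic homogeneous polynomials of common degree $k$). $B^n$ is the unit ball in $\mathbb{R}^n$. *)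

theory Defs
  imports "HOL-Analysis.Analysis"
begin

definition Dblock :: "real \<Rightarrow> nat \<Rightarrow> nat \<Rightarrow> real" where
  "Dblock t i j =
     (if i = 0 \<and> j = 0 then cos t else if i = 0 \<and> j = 1 then - sin t
      else if i = 1 \<and> j = 0 then sin t else if i = 1 \<and> j = 1 then cos t else 0)"

text \<open>R_t in Mat(2m,R): block diagonal with m blocks D_t (indices 0..2m-1).\<close>
definition Rmat :: "nat \<Rightarrow> real \<Rightarrow> nat \<Rightarrow> nat \<Rightarrow> real" where
  "Rmat m t i j = (if i < 2*m \<and> j < 2*m \<and> i div 2 = j div 2
                   then Dblock t (i mod 2) (j mod 2) else 0)"

definition Rapply :: "nat \<Rightarrow> real \<Rightarrow> (nat \<Rightarrow> real) \<Rightarrow> (nat \<Rightarrow> real)" where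
  "Rapply m t y = (\<lambda>i. \<Sum>j<2*m. Rmat m t i j * y j)"

definition partial :: "'n::finite \<Rightarrow> (real^'n \<Rightarrow> real) \<Rightarrow> real^'n \<Rightarrow> real" where
  "partial i f x = frechet_derivative f (at x) (axis i 1)"

fun iter_partial :: "'n::finite list \<Rightarrow> (real^'n \<Rightarrow> real) \<Rightarrow> real^'n \<Rightarrow> real" where
  "iter_partial [] f = f"
| "iter_partial (i # is) f = partial i (iter_partial is f)"

definition smooth_fun :: "(real^'n::finite \<Rightarrow> real) \<Rightarrow> bool" where
  "smooth_fun f \<longleftrightarrow> (\<forall>is x. iter_partial is f differentiable (at x))"

definition test_fun :: "(real^'n::finite) set \<Rightarrow> (real^'n \<Rightarrow> real) \<Rightarrow> bool" where
  "test_fun U \<phi> \<longleftrightarrow> smooth_fun \<phi> \<and>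
     (\<exists>K. compact K \<and> K \<subseteq> U \<and> (\<forall>x. x \<notin> K \<longrightarrow> \<phi> x = 0))"

definition laplacian :: "(real^'n::finite \<Rightarrow> real) \<Rightarrow> real^'n \<Rightarrow> real" where
  "laplacian f x = (\<Sum>i\<in>UNIV. partial i (partial i f) x)"

definition monomial_fun :: "('n::finite \<Rightarrow> nat) \<Rightarrow> real^'n \<Rightarrow> real" where
  "monomial_fun a x = (\<Prod>i\<in>UNIV. (x $ i) ^ a i)"

definition homog_poly :: "nat \<Rightarrow> (real^'n::finite \<Rightarrow> real) \<Rightarrow> bool" where
  "homog_poly k P \<longleftrightarrow> (\<exists>c :: ('n \<Rightarrow> nat) \<Rightarrow> real.
      \<forall>x. P x = (\<Sum>a\<in>{a. sum a UNIV = k}. c a * monomial_fun a x))"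

definition harmonic_fun :: "(real^'n::finite \<Rightarrow> real) \<Rightarrow> bool" where
  "harmonic_fun P \<longleftrightarrow> (\<forall>x. laplacian P x = 0)"

text \<open>An eigenmap S^{n-1} -> S^{2m-1} of degree k: its components F_0,...,F_{2m-1}
  are harmonic homogeneous polynomials of common degree k, and F maps the unit
  sphere into the unit sphere of R^{2m}.  (Values of F at indices >= 2m are irrelevant.)\<close>
definition eigenmap :: "nat \<Rightarrow> nat \<Rightarrow> (real^'n::finite \<Rightarrow> nat \<Rightarrow> real) \<Rightarrow> bool" where
  "eigenmap m k F \<longleftrightarrow>
     (\<forall>j<2*m. homog_poly k (\<lambda>x. F x j) \<and> harmonic_fun (\<lambda>x. F x j)) \<and>
     (\<forall>x. norm x = 1 \<longrightarrow> (\<Sum>j<2*m. (F x j)^2) = 1)"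

definition C2_on_unit :: "(real \<Rightarrow> real) \<Rightarrow> bool" where
  "C2_on_unit \<Phi> \<longleftrightarrow> (\<exists>\<Phi>1 \<Phi>2.
     (\<forall>r\<in>{0..1}. (\<Phi> has_real_derivative \<Phi>1 r) (at r within {0..1})) \<and>
     (\<forall>r\<in>{0..1}. (\<Phi>1 has_real_derivative \<Phi>2 r) (at r within {0..1})) \<and>
     continuous_on {0..1} \<Phi>2)"

definition L2_on :: "(real^'n::finite) set \<Rightarrow> (real^'n \<Rightarrow> real) \<Rightarrow> bool" where
  "L2_on U f \<longleftrightarrow> set_borel_measurable lebesgue U f \<and>
                 set_integrable lebesgue U (\<lambda>x. (f x)^2)"

definition sobolev_H12 :: "(real^'n::finite) set \<Rightarrow> (real^'n \<Rightarrow> real) \<Rightarrow> bool" where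
  "sobolev_H12 U f \<longleftrightarrow> L2_on U f \<and>
     (\<forall>i. \<exists>v. L2_on U v \<and>
        (\<forall>\<phi>. test_fun U \<phi> \<longrightarrow>
           (LINT x : U | lebesgue. f x * partial i \<phi> x) = - (LINT x : U | lebesgue. v x * \<phi> x)))"

definition sobolev_H12_vec :: "nat \<Rightarrow> (real^'n::finite) set \<Rightarrow> (real^'n \<Rightarrow> nat \<Rightarrow> real) \<Rightarrow> bool" where
  "sobolev_H12_vec d U u \<longleftrightarrow> (\<forall>j<d. sobolev_H12 U (\<lambda>x. u x j))"

end

theory Submission
  imports Defs
begin


lemma partial_eq:
  assumes "(f has_derivative f') (at x)"
  shows "partial i f x = f' (axis i 1)"
  using frechet_derivative_at[OF assms] unfolding partial_def by simp

lemma partial_local: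
  assumes "open S" "x \<in> S" "\<And>y. y \<in> S \<Longrightarrow> f y = g y" "g differentiable (at x)"
  shows "f differentiable (at x)" "partial i f x = partial i g x"
proof -
  have "(g has_derivative frechet_derivative g (at x)) (at x)"
    using assms(4) frechet_derivative_works by blast
  then have d: "(f has_derivative frechet_derivative g (at x)) (at x)"
    by (rule has_derivative_transform_within_open[OF _ assms(1,2)]) (use assms(3) in auto)
  then show "f differentiable (at x)" unfolding differentiable_def by blast
  show "partial i f x = partial i g x"
    using partial_eq[OF d] unfolding partial_def by simp
qed

lemma partial_local_zero:
  assumes "open S" "x \<in> S" "\<And>y. y \<in> S \<Longrightarrow> f y = 0"
  shows "f differentiable (at x)" "partial i f x = 0"
proof -
  have z: "((\<lambda>y::real^'a. 0::real) has_derivative (\<lambda>h. 0)) (at x)" by simp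
  show "f differentiable (at x)" using partial_local(1)[OF assms(1,2), of f "\<lambda>y. 0"] assms(3) z
    unfolding differentiable_def by blast
  have "partial i f x = partial i (\<lambda>y. 0) x"
    using partial_local(2)[OF assms(1,2), of f "\<lambda>y. 0" i] assms(3) z
    unfolding differentiable_def by blast
  then show "partial i f x = 0" using partial_eq[OF z] by simp
qed

lemma partial_mult:
  assumes "f differentiable (at x)" "g differentiable (at x)"
  shows "partial i (\<lambda>y. f y * g y) x = f x * partial i g x + partial i f x * g x"
proof -
  have "((\<lambda>y. f y * g y) has_derivative (\<lambda>h. f x * frechet_derivative g (at x) h + frechet_derivative f (at x) h * g x)) (at x)"
    using assms by (intro has_derivative_mult) (auto simp: frechet_derivative_works)
  from partial_eq[OF this] show ?thesis unfolding partial_def by simp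
qed

lemma line_deriv:
  assumes "(f has_derivative f') (at (x + t *\<^sub>R e))"
  shows "((\<lambda>s. f (x + s *\<^sub>R e)) has_real_derivative f' e) (at t)"
proof -
  have l: "((\<lambda>s. x + s *\<^sub>R e) has_derivative (\<lambda>s. s *\<^sub>R e)) (at t)"
    by (auto intro!: derivative_eq_intros)
  have "((f \<circ> (\<lambda>s. x + s *\<^sub>R e)) has_derivative (f' \<circ> (\<lambda>s. s *\<^sub>R e))) (at t)"
    using diff_chain_at[OF l, of f f'] assms by simp
  moreover have "linear f'" using assms has_derivative_linear by blast
  ultimately show ?thesis
    unfolding has_field_derivative_def o_def
    by (simp add: linear_scale[of f'] mult.commute[of _ "f' e"])
qed



lemma lborel_translate:
  fixes f :: "'a::euclidean_space \<Rightarrow> real"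
  assumes [measurable]: "f \<in> borel_measurable borel"
  shows "integral\<^sup>L lborel (\<lambda>x. f (t + x)) = integral\<^sup>L lborel f"
proof -
  have e: "lborel = distr lborel borel (\<lambda>x::'a. t + x)" using lborel_affine[of 1 t] by (simp add: density_1)
  have "integral\<^sup>L lborel f = integral\<^sup>L (distr lborel borel (\<lambda>x::'a. t + x)) f"
    by (subst e) simp
  also have "\<dots> = integral\<^sup>L lborel (\<lambda>x. f (t + x))"
    by (rule integral_distr) auto
  finally show ?thesis by simp
qed

lemma integrable_bounded_support:
  fixes f :: "'a::euclidean_space \<Rightarrow> real"
  assumes "f \<in> borel_measurable borel" "\<And>x. \<bar>f x\<bar> \<le> M" "\<And>x. norm x > R \<Longrightarrow> f x = 0"
  shows "integrable lborel f"
proof -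
  have "integrable lborel (\<lambda>x. M * indicator (cball 0 R) x)"
    by (intro integrable_mult_right integrable_real_indicator) (simp_all add: emeasure_lborel_cball_finite[unfolded infinity_ennreal_def])
  then show ?thesis
  proof (rule Bochner_Integration.integrable_bound)
    show "f \<in> borel_measurable lborel" using assms(1) by simp
    show "AE x in lborel. norm (f x) \<le> norm (M * indicator (cball 0 R) x)"
    proof (rule AE_I2)
      fix x :: 'a
      show "norm (f x) \<le> norm (M * indicator (cball 0 R) x)"
        using assms(2)[of x] assms(3)[of x] by (cases "norm x > R") (auto simp: indicator_def)
    qed
  qed
qed

lemma core_ibp:
  fixes g :: "real^'n \<Rightarrow> real"
  assumes diff: "\<And>x. g differentiable (at x)"
    and bnd: "\<And>x. \<bar>partial i g x\<bar> \<le> M"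
    and supp: "\<And>x. norm x > R \<Longrightarrow> g x = 0"
  shows "integrable lborel (partial i g)" "integral\<^sup>L lborel (partial i g) = 0"
proof -
  define e :: "real^'n" where "e = axis i 1"
  have ne: "norm e = 1" by (simp add: e_def)
  have cont: "continuous_on UNIV g"
    using diff by (simp add: continuous_at_imp_continuous_on differentiable_imp_continuous_within)
  have gb[measurable]: "g \<in> borel_measurable borel" using cont by (rule borel_measurable_continuous_onI)
  have "compact (g ` cball 0 R)" by (intro compact_continuous_image continuous_on_subset[OF cont]) auto
  then obtain Bg where Bg: "\<And>y. y \<in> g ` cball 0 R \<Longrightarrow> norm y \<le> Bg"
    using compact_imp_bounded bounded_iff by metis
  have gbd: "\<bar>g x\<bar> \<le> \<bar>Bg\<bar>" for x
    using Bg[of "g x"] supp[of x] by (cases "norm x > R") auto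
  have gint: "integrable lborel g"
    by (rule integrable_bounded_support[OF gb gbd supp])
  define h :: "nat \<Rightarrow> real" where "h N = inverse (real (Suc N))" for N
  have hpos: "h N > 0" "h N \<le> 1" for N by (auto simp: h_def field_simps)
  define q where "q N x = (g (x + h N *\<^sub>R e) - g x) / h N" for N x
  have deriv: "((\<lambda>s. g (y + s *\<^sub>R e)) has_real_derivative partial i g (y + t *\<^sub>R e)) (at t)" for y t
    using line_deriv[of g "frechet_derivative g (at (y + t *\<^sub>R e))" y t e] diff
    by (simp add: frechet_derivative_works partial_def e_def)
  have pz: "partial i g x = 0" if "norm x > R" for x
  proof (rule partial_local_zero(2)[of "- cball 0 R"])
    show "open (- cball (0::real^'n) R)" by auto
    show "x \<in> - cball 0 R" using that by auto
    show "g y = 0" if "y \<in> - cball 0 R" for y using supp that by auto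
  qed
  have far: "norm (x + h N *\<^sub>R e) > R" if "norm x > R + 1" for x N
    using norm_triangle_ineq2[of x "- h N *\<^sub>R e"] hpos[of N] ne that by (auto simp: algebra_simps)
  have qb[measurable]: "q N \<in> borel_measurable borel" for N
    unfolding q_def by measurable
  have qbound: "norm (q N x) \<le> M * indicator (cball 0 (R+1)) x" for N x
  proof (cases "norm x > R + 1")
    case True
    then have "norm (x + h N *\<^sub>R e) > R" by (rule far)
    then show ?thesis using True supp[of x] supp[of "x + h N *\<^sub>R e"] by (simp add: q_def indicator_def)
  next
    case False
    obtain z where "z > 0" "z < h N" and z: "g (x + h N *\<^sub>R e) - g (x + 0 *\<^sub>R e) = (h N - 0) * partial i g (x + z *\<^sub>R e)"
      using MVT2[of 0 "h N" "\<lambda>s. g (x + s *\<^sub>R e)" "\<lambda>s. partial i g (x + s *\<^sub>R e)"] hpos[of N] deriv[of x] by blast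
    then have "q N x = partial i g (x + z *\<^sub>R e)" using hpos[of N] by (simp add: q_def)
    then show ?thesis using False bnd by (simp add: indicator_def)
  qed
  have wint: "integrable lborel (\<lambda>x. M * indicator (cball 0 (R+1)) x :: real)"
    by (intro integrable_mult_right integrable_real_indicator) (simp_all add: emeasure_lborel_cball_finite[unfolded infinity_ennreal_def])
  have qlim: "(\<lambda>N. q N x) \<longlonglongrightarrow> partial i g x" for x
  proof -
    have "((\<lambda>s. g (x + s *\<^sub>R e)) has_real_derivative partial i g x) (at 0)"
      using deriv[of x 0] by simp
    then have l: "((\<lambda>s. (g (x + s *\<^sub>R e) - g x) / s) \<longlongrightarrow> partial i g x) (at 0)"
      unfolding has_field_derivative_iff by simp
    have "filterlim h (at 0) sequentially"
      unfolding filterlim_at h_def using LIMSEQ_inverse_real_of_nat by (auto intro!: always_eventually)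
    from filterlim_compose[OF l this] show ?thesis by (simp add: q_def o_def)
  qed
  have pb[measurable]: "partial i g \<in> borel_measurable borel"
    by (rule borel_measurable_LIMSEQ_real[OF qlim qb]) 
  have pb': "partial i g \<in> borel_measurable lborel" by simp
  have qb': "q N \<in> borel_measurable lborel" for N by simp
  have qint: "integrable lborel (q N)" for N
    by (intro Bochner_Integration.integrable_bound[OF wint]) (auto intro!: AE_I2 intro: order_trans[OF qbound[unfolded real_norm_def]])
  have q0: "integral\<^sup>L lborel (q N) = 0" for N
  proof -
    have i1: "integrable lborel (\<lambda>x. g (x + h N *\<^sub>R e))"
      by (rule integrable_bounded_support[of _ "\<bar>Bg\<bar>" "R + 1"]) (use gbd supp far in auto)
    have "integral\<^sup>L lborel (\<lambda>x. g (x + h N *\<^sub>R e)) = integral\<^sup>L lborel g"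
      using lborel_translate[OF gb, of "h N *\<^sub>R e"] by (simp add: add.commute)
    then show ?thesis unfolding q_def using i1 gint
      by (simp add: Bochner_Integration.integral_diff)
  qed
  show "integrable lborel (partial i g)"
    by (rule integrable_dominated_convergence[where s=q, OF pb' qb' wint AE_I2[OF qlim] AE_I2[OF qbound]])
  have "(\<lambda>N. integral\<^sup>L lborel (q N)) \<longlonglongrightarrow> integral\<^sup>L lborel (partial i g)"
    by (rule integral_dominated_convergence[where s=q, OF pb' qb' wint AE_I2[OF qlim] AE_I2[OF qbound]])
  then have "(\<lambda>N. 0) \<longlonglongrightarrow> integral\<^sup>L lborel (partial i g)" by (simp add: q0)
  then show "integral\<^sup>L lborel (partial i g) = 0" using LIMSEQ_unique[OF tendsto_const] by metis
qed



definition theta :: "real \<Rightarrow> real" where "theta t = t * \<bar>t\<bar>"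

lemma theta_deriv: "(theta has_real_derivative 2 * \<bar>t\<bar>) (at t)"
proof (cases "t = 0")
  case True
  have "((\<lambda>y. (theta y - theta 0) / (y - 0)) \<longlongrightarrow> 2 * \<bar>0\<bar>) (at 0)"
  proof -
    have "((\<lambda>y::real. \<bar>y\<bar>) \<longlongrightarrow> \<bar>0\<bar>) (at 0)" by (intro tendsto_intros)
    moreover have "eventually (\<lambda>y. \<bar>y\<bar> = (theta y - theta 0) / (y - 0)) (at (0::real))"
      by (auto simp: theta_def eventually_at_filter)
    ultimately show ?thesis using tendsto_cong by fastforce
  qed
  then show ?thesis using True by (simp add: has_field_derivative_iff)
next
  case False
  show ?thesis
  proof (cases "t > 0")
    case True
    have "((\<lambda>y. y * y) has_real_derivative 2 * \<bar>t\<bar>) (at t)"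
      using True by (auto intro!: derivative_eq_intros)
    then show ?thesis
      by (rule has_field_derivative_transform_within_open[of _ _ _ "{0<..}"]) (use True in \<open>auto simp: theta_def\<close>)
  next
    case False2: False
    then have "t < 0" using False by auto
    have "((\<lambda>y. - (y * y)) has_real_derivative 2 * \<bar>t\<bar>) (at t)"
      using \<open>t < 0\<close> by (auto intro!: derivative_eq_intros)
    then show ?thesis
      by (rule has_field_derivative_transform_within_open[of _ _ _ "{..<0}"]) (use \<open>t < 0\<close> in \<open>auto simp: theta_def\<close>)
  qed
qed

definition eta :: "real \<Rightarrow> real" where
  "eta s = 1/2 - (theta (s - 1) - 2 * theta (s - 3/2) + theta (s - 2))"
definition deta :: "real \<Rightarrow> real" where
  "deta s = - (2 * \<bar>s - 1\<bar> - 4 * \<bar>s - 3/2\<bar> + 2 * \<bar>s - 2\<bar>)"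

lemma eta_deriv: "(eta has_real_derivative deta s) (at s)"
  unfolding eta_def deta_def
  by (auto intro!: derivative_eq_intros theta_deriv[THEN DERIV_chain2])

lemma eta_le1: "s \<le> 1 \<Longrightarrow> eta s = 1"
  by (simp add: eta_def theta_def abs_if algebra_simps power2_eq_square)

lemma eta_ge2: "s \<ge> 2 \<Longrightarrow> eta s = 0"
  by (simp add: eta_def theta_def abs_if algebra_simps power2_eq_square)

lemma eta_bounds: "0 \<le> eta s \<and> eta s \<le> 1"
proof (cases "s \<le> 1")
  case True then show ?thesis by (simp add: eta_le1)
next
  case False
  show ?thesis
  proof (cases "s \<ge> 2")
    case True then show ?thesis by (simp add: eta_ge2)
  next
    case False2: False
    show ?thesis
    proof (cases "s \<le> 3/2")
      case True
      then have "eta s = 1 - 2 * (s-1)^2" using False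
        by (simp add: eta_def theta_def abs_if algebra_simps power2_eq_square)
      moreover have "(s-1)^2 \<le> (1/2)^2" using True False by (intro power_mono) auto
      moreover have "(s-1)^2 \<ge> 0" by simp
      ultimately show ?thesis by (simp add: power2_eq_square)
    next
      case False3: False
      then have "eta s = 2 * (2 - s)^2" using False2
        by (simp add: eta_def theta_def abs_if algebra_simps power2_eq_square)
      moreover have "(2-s)^2 \<le> (1/2)^2" using False2 False3 by (intro power_mono) auto
      moreover have "(2-s)^2 \<ge> 0" by simp
      ultimately show ?thesis by (simp add: power2_eq_square)
    qed
  qed
qed

lemma deta_bound: "\<bar>deta s\<bar> \<le> 2"
  unfolding deta_def by (auto simp: abs_if)

lemma deta_zero: "s \<le> 1 \<or> s \<ge> 2 \<Longrightarrow> deta s = 0"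
  unfolding deta_def by (auto simp: abs_if)

lemma deta_cont: "continuous_on UNIV deta"
  unfolding deta_def by (intro continuous_intros)

lemma deta_borel[measurable]: "deta \<in> borel_measurable borel"
  by (rule borel_measurable_continuous_onI[OF deta_cont])

definition psi :: "real \<Rightarrow> real^'n \<Rightarrow> real" where "psi \<epsilon> x = eta ((x \<bullet> x) / \<epsilon>^2)"
definition dpsi :: "real \<Rightarrow> 'n \<Rightarrow> real^'n \<Rightarrow> real" where
  "dpsi \<epsilon> i x = deta ((x \<bullet> x) / \<epsilon>^2) * (2 * x$i / \<epsilon>^2)"

lemma psi_has_deriv:
  fixes x :: "real^'n::finite"
  shows "(psi \<epsilon> has_derivative (\<lambda>h. ((h \<bullet> x + x \<bullet> h) / \<epsilon>^2) * deta ((x \<bullet> x) / \<epsilon>^2))) (at x)"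
proof -
  have e: "(\<lambda>x::real^'n. (x \<bullet> x) / \<epsilon>^2) = (\<lambda>x. inverse (\<epsilon>^2) * (x \<bullet> x))"
    by (simp add: field_simps)
  have "((\<lambda>x::real^'n. inverse (\<epsilon>^2) * (x \<bullet> x)) has_derivative (\<lambda>h. inverse (\<epsilon>^2) * (x \<bullet> h + h \<bullet> x))) (at x)"
    by (intro has_derivative_mult_right has_derivative_inner has_derivative_ident)
  then have d: "((\<lambda>x::real^'n. (x \<bullet> x) / \<epsilon>^2) has_derivative (\<lambda>h. (h \<bullet> x + x \<bullet> h) / \<epsilon>^2)) (at x)"
    unfolding e by (simp add: field_simps add.commute)
  show ?thesis unfolding psi_def
    by (rule DERIV_compose_FDERIV[OF eta_deriv d])
qed

lemma psi_diff: "psi \<epsilon> differentiable (at x)"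
  using psi_has_deriv unfolding differentiable_def by blast

lemma partial_psi: "partial i (psi \<epsilon>) x = dpsi \<epsilon> i x"
  unfolding partial_eq[OF psi_has_deriv] dpsi_def
  by (simp add: inner_axis inner_commute[of "axis i 1"])

lemma psi_small: "\<epsilon> > 0 \<Longrightarrow> norm x < \<epsilon> \<Longrightarrow> psi \<epsilon> x = 1"
proof -
  assume "\<epsilon> > 0" "norm x < \<epsilon>"
  then have "x \<bullet> x < \<epsilon>^2" by (simp add: power_strict_mono dot_square_norm)
  then show ?thesis using \<open>\<epsilon> > 0\<close> unfolding psi_def by (intro eta_le1) simp
qed

lemma ratio_big: "\<epsilon> > 0 \<Longrightarrow> norm x \<ge> 2 * \<epsilon> \<Longrightarrow> (x \<bullet> x) / \<epsilon>^2 \<ge> 2"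
proof -
  assume a: "\<epsilon> > 0" "norm x \<ge> 2 * \<epsilon>"
  then have "(2*\<epsilon>)^2 \<le> (norm x)^2" by (intro power_mono) auto
  then have "4 * \<epsilon>^2 \<le> x \<bullet> x" by (simp add: power_mult_distrib dot_square_norm)
  then have "2 * \<epsilon>^2 \<le> x \<bullet> x" using zero_le_power2[of \<epsilon>] by linarith
  then show ?thesis using a by (simp add: le_divide_eq)
qed

lemma psi_far: "\<epsilon> > 0 \<Longrightarrow> norm x \<ge> 2 * \<epsilon> \<Longrightarrow> psi \<epsilon> x = 0"
  unfolding psi_def by (intro eta_ge2 ratio_big)

lemma psi_bounds: "0 \<le> psi \<epsilon> x \<and> psi \<epsilon> x \<le> 1"
  unfolding psi_def by (rule eta_bounds)

lemma dpsi_bound: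
  assumes "\<epsilon> > 0"
  shows "\<bar>dpsi \<epsilon> i x\<bar> \<le> (8 / \<epsilon>) * indicator (ball 0 (2 * \<epsilon>)) x"
proof (cases "norm x \<ge> 2 * \<epsilon>")
  case True
  then show ?thesis using deta_zero[OF disjI2[OF ratio_big[OF assms True]]] by (simp add: dpsi_def)
next
  case False
  have xi: "\<bar>x$i\<bar> \<le> 2 * \<epsilon>" using False component_le_norm_cart[of x i] by simp
  have "\<bar>dpsi \<epsilon> i x\<bar> = \<bar>deta ((x \<bullet> x) / \<epsilon>^2)\<bar> * (2 * \<bar>x$i\<bar> / \<epsilon>^2)"
    by (simp add: dpsi_def abs_mult)
  also have "\<dots> \<le> 2 * (2 * (2 * \<epsilon>) / \<epsilon>^2)"
    using xi assms by (intro mult_mono deta_bound divide_right_mono) auto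
  also have "\<dots> = 8 / \<epsilon>" using assms by (simp add: power2_eq_square field_simps)
  finally show ?thesis using False by (simp add: indicator_def)
qed

lemma dpsi_small: "\<epsilon> > 0 \<Longrightarrow> norm x < \<epsilon> \<Longrightarrow> dpsi \<epsilon> i x = 0"
proof -
  assume "\<epsilon> > 0" "norm x < \<epsilon>"
  then have "x \<bullet> x < \<epsilon>^2" by (simp add: power_strict_mono dot_square_norm)
  then show ?thesis using \<open>\<epsilon> > 0\<close> unfolding dpsi_def by (subst deta_zero) auto
qed

lemma dpsi_borel[measurable]: "dpsi \<epsilon> i \<in> borel_measurable borel"
proof (cases "\<epsilon> = 0")
  case True
  then have "dpsi \<epsilon> i = (\<lambda>x. 0)" by (auto simp: dpsi_def)
  then show ?thesis by simp
next
  case False then show ?thesis unfolding dpsi_def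
  by (intro borel_measurable_continuous_onI continuous_intros continuous_on_compose2[OF deta_cont]) auto
qed

lemma psi_borel[measurable]: "psi \<epsilon> \<in> borel_measurable borel"
  using psi_diff by (intro borel_measurable_continuous_onI continuous_at_imp_continuous_on)
     (auto intro: differentiable_imp_continuous_within)



lemma ball_measure: "r \<ge> 0 \<Longrightarrow> measure lborel (ball (0::real^'n) r) = r ^ CARD('n) * measure lborel (ball (0::real^'n) 1)"
  using content_ball_conv_unit_ball[of r "0::real^'n"] by simp

lemma inv_sq_pointwise:
  fixes x :: "real^'n"
  assumes "x \<noteq> 0" "norm x < 1"
  shows "summable (\<lambda>k. 4^(k+1) * indicator (ball 0 ((1/2)^k)) x :: real)"
    and "1 / (norm x)^2 \<le> (\<Sum>k. 4^(k+1) * indicator (ball 0 ((1/2)^k)) x :: real)"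
proof -
  define S where "S = {k. norm x < (1/2::real)^k}"
  have nx: "norm x > 0" using assms by simp
  obtain K where K: "(1/2::real)^K < norm x" using real_arch_pow_inv[OF nx, of "1/2"] by auto
  have "S \<subseteq> {..<K}"
  proof
    fix k assume "k \<in> S"
    then have "norm x < (1/2)^k" by (simp add: S_def)
    then show "k \<in> {..<K}"
      using K by (cases "k < K") (auto simp: not_less dest!: power_decreasing[of K k "1/2::real"])
  qed
  then have fin: "finite S" by (rule finite_subset) auto
  have S0: "0 \<in> S" using assms by (simp add: S_def)
  have tz: "4^(k+1) * indicator (ball 0 ((1/2)^k)) x = (0::real)" if "k \<notin> S" for k
    using that by (simp add: S_def indicator_def)
  have sm: "(\<lambda>k. 4^(k+1) * indicator (ball 0 ((1/2)^k)) x :: real) sums (\<Sum>k\<in>S. 4^(k+1) * indicator (ball 0 ((1/2)^k)) x)"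
    by (rule sums_finite[OF fin]) (use tz in auto)
  then show s: "summable (\<lambda>k. 4^(k+1) * indicator (ball 0 ((1/2)^k)) x :: real)"
    by (rule sums_summable)
  define j where "j = Max S"
  have jS: "j \<in> S" unfolding j_def using fin S0 by (intro Max_in) auto
  have "j + 1 \<notin> S" using fin jS by (metis Max_ge j_def add_le_same_cancel1 le_zero_eq one_neq_zero)
  then have lo: "(1/2)^(j+1) \<le> norm x" by (simp add: S_def)
  have "1 / (norm x)^2 \<le> 1 / ((1/2)^(j+1))^2"
    using lo nx by (intro divide_left_mono power_mono mult_pos_pos) auto
  also have "\<dots> = 4^(j+1)"
  proof -
    have "(2::real)^(2*j) = 4^j" by (simp add: power_mult)
    then show ?thesis by (simp add: power_one_over power_mult_distrib[symmetric] power_mult[symmetric] mult.commute[of _ 2])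
  qed
  also have "\<dots> = (\<Sum>k\<in>{j}. 4^(k+1) * indicator (ball 0 ((1/2)^k)) x)"
    using jS by (simp add: S_def indicator_def)
  also have "\<dots> \<le> (\<Sum>k. 4^(k+1) * indicator (ball 0 ((1/2)^k)) x)"
    by (rule sum_le_suminf[OF s]) auto
  finally show "1 / (norm x)^2 \<le> (\<Sum>k. 4^(k+1) * indicator (ball 0 ((1/2)^k)) x :: real)" .
qed

lemma inv_sq_integrable:
  assumes n3: "CARD('n) \<ge> 3"
  shows "integrable lborel (\<lambda>x::real^'n. indicator (ball 0 1) x / (norm x)^2)"
proof -
  define V where "V = measure lborel (ball (0::real^'n) 1)"
  have V0: "V \<ge> 0" by (simp add: V_def)
  define f :: "nat \<Rightarrow> real^'n \<Rightarrow> real" where "f k x = 4^(k+1) * indicator (ball 0 ((1/2)^k)) x" for k x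
  have fi: "integrable lborel (f k)" for k
    unfolding f_def by (intro integrable_mult_right integrable_real_indicator) (simp_all add: emeasure_lborel_ball_finite[unfolded infinity_ennreal_def])
  have fint: "(LINT x|lborel. norm (f k x)) = 4^(k+1) * ((1/2)^k)^CARD('n) * V" for k
  proof -
    have "(LINT x|lborel. norm (f k x)) = (LINT x|lborel. 4^(k+1) * indicator (ball (0::real^'n) ((1/2)^k)) x)"
      by (rule Bochner_Integration.integral_cong) (auto simp: f_def indicator_def)
    also have "\<dots> = 4^(k+1) * measure lborel (ball (0::real^'n) ((1/2)^k))"
      by simp
    also have "\<dots> = 4^(k+1) * (((1/2)^k)^CARD('n) * V)"
      by (subst ball_measure) (auto simp: V_def)
    finally show ?thesis by (simp only: mult.assoc)
  qed
  have "summable (\<lambda>k. LINT x|lborel. norm (f k x))"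
  proof (rule summable_comparison_test)
    show "summable (\<lambda>k. 4 * V * (1/2::real)^k)" by (intro summable_mult summable_geometric) auto
    show "\<exists>N. \<forall>k\<ge>N. norm (LINT x|lborel. norm (f k x)) \<le> 4 * V * (1/2)^k"
    proof (intro exI allI impI)
      fix k :: nat
      have "(1/2::real)^CARD('n) \<le> (1/2)^3" using n3 by (intro power_decreasing) auto
      moreover have "(1/2::real)^3 = 1/8" by (simp add: power3_eq_cube)
      ultimately have h: "4 * (1/2::real)^CARD('n) \<le> 1/2" by linarith
      have "4^(k+1) * ((1/2::real)^k)^CARD('n) = 4 * (4 * (1/2)^CARD('n))^k"
        by (simp add: power_mult[symmetric] mult.commute[of k "CARD('n)"] power_mult_distrib)
      also have "\<dots> \<le> 4 * (1/2)^k" using h by (intro mult_left_mono power_mono) auto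
      finally have "4^(k+1) * ((1/2::real)^k)^CARD('n) * V \<le> 4 * (1/2)^k * V"
        using V0 by (intro mult_right_mono) auto
      moreover have "0 \<le> 4^(k+1) * ((1/2::real)^k)^CARD('n) * V" using V0 by simp
      ultimately show "norm (LINT x|lborel. norm (f k x)) \<le> 4 * V * (1/2)^k"
        unfolding fint by (simp only: real_norm_def abs_of_nonneg mult_ac)
    qed
  qed
  moreover have "AE x in lborel. summable (\<lambda>k. norm (f k x))"
    using AE_lborel_singleton[of "0::real^'n"]
  proof (rule eventually_mono)
    fix x :: "real^'n" assume x: "x \<noteq> 0"
    have fnn: "norm (f k x) = f k x" for k by (simp add: f_def indicator_def)
    show "summable (\<lambda>k. norm (f k x))"
    proof (cases "norm x < 1")
      case True
      then show ?thesis using x inv_sq_pointwise(1)[of x] unfolding fnn by (simp add: f_def)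
    next
      case False
      then have "f k x = 0" for k
        using power_le_one[of "1/2::real" k] by (auto simp: f_def indicator_def)
      then show ?thesis by simp
    qed
  qed
  ultimately have wi: "integrable lborel (\<lambda>x. \<Sum>k. f k x)"
    by (intro integrable_suminf fi)
  have [measurable]: "ball (0::real^'n) 1 \<in> sets borel" by simp
  have [measurable]: "(\<lambda>x::real^'n. (norm x)^2) \<in> borel_measurable borel"
    by (intro borel_measurable_continuous_onI continuous_intros)
  show ?thesis
  proof (rule Bochner_Integration.integrable_bound[OF wi])
    show "(\<lambda>x::real^'n. indicator (ball 0 1) x / (norm x)^2) \<in> borel_measurable lborel" by measurable
    show "AE x in lborel. norm (indicator (ball 0 1) x / (norm x)^2) \<le> norm (\<Sum>k. f k x)"
    proof (rule AE_I2)
      fix x :: "real^'n"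
      show "norm (indicator (ball 0 1) x / (norm x)^2) \<le> norm (\<Sum>k. f k x)"
      proof (cases "x \<noteq> 0 \<and> norm x < 1")
        case True
        then show ?thesis using inv_sq_pointwise(2)[of x] by (auto simp: f_def indicator_def)
      next
        case False
        then have "indicator (ball 0 1) x / (norm x)^2 = (0::real)" by (auto simp: indicator_def)
        then show ?thesis by (simp only: norm_zero norm_ge_zero)
      qed
    qed
  qed
qed



lemma partial_one_minus:
  assumes "h differentiable (at x)"
  shows "partial i (\<lambda>y. 1 - h y) x = - partial i h x"
proof -
  have "((\<lambda>y. 1 - h y) has_derivative (\<lambda>v. 0 - frechet_derivative h (at x) v)) (at x)"
    using assms by (intro has_derivative_diff has_derivative_const) (simp add: frechet_derivative_works)
  from partial_eq[OF this] show ?thesis unfolding partial_def by simp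
qed

lemma test_fun_props:
  fixes \<phi> :: "real^'n \<Rightarrow> real"
  assumes "test_fun (ball 0 1) \<phi>"
  obtains K Mp Md where "compact K" "K \<subseteq> ball 0 1" "\<And>x. x \<notin> K \<Longrightarrow> \<phi> x = 0"
    "\<And>x. x \<notin> K \<Longrightarrow> partial i \<phi> x = 0"
    "\<And>x. \<phi> differentiable (at x)" "\<And>x. partial i \<phi> differentiable (at x)"
    "\<And>x. \<bar>\<phi> x\<bar> \<le> Mp" "\<And>x. \<bar>partial i \<phi> x\<bar> \<le> Md"
    "\<phi> \<in> borel_measurable borel" "partial i \<phi> \<in> borel_measurable borel"
proof -
  from assms obtain K where K: "compact K" "K \<subseteq> ball 0 1" "\<And>x. x \<notin> K \<Longrightarrow> \<phi> x = 0"
    and sm: "smooth_fun \<phi>" unfolding test_fun_def by blast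
  have d0: "\<phi> differentiable (at x)" for x using sm unfolding smooth_fun_def
    by (metis iter_partial.simps(1))
  have d1: "partial i \<phi> differentiable (at x)" for x using sm unfolding smooth_fun_def
    by (metis iter_partial.simps)
  have z1: "partial i \<phi> x = 0" if "x \<notin> K" for x
  proof (rule partial_local_zero(2)[of "- K"])
    show "open (- K)" using K(1) by (simp add: compact_imp_closed open_Compl)
  qed (use that K(3) in auto)
  have c0: "continuous_on UNIV \<phi>" using d0
    by (simp add: continuous_at_imp_continuous_on differentiable_imp_continuous_within)
  have c1: "continuous_on UNIV (partial i \<phi>)" using d1
    by (simp add: continuous_at_imp_continuous_on differentiable_imp_continuous_within)
  have "compact (\<phi> ` K)" by (rule compact_continuous_image[OF continuous_on_subset[OF c0] K(1)]) auto
  then obtain Mp where Mp: "\<And>y. y \<in> \<phi> ` K \<Longrightarrow> norm y \<le> Mp" using compact_imp_bounded bounded_iff by metis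
  have "compact (partial i \<phi> ` K)" by (rule compact_continuous_image[OF continuous_on_subset[OF c1] K(1)]) auto
  then obtain Md where Md: "\<And>y. y \<in> partial i \<phi> ` K \<Longrightarrow> norm y \<le> Md" using compact_imp_bounded bounded_iff by metis
  have bp: "\<bar>\<phi> x\<bar> \<le> \<bar>Mp\<bar>" for x using Mp[of "\<phi> x"] K(3)[of x] by (cases "x \<in> K") auto
  have bd: "\<bar>partial i \<phi> x\<bar> \<le> \<bar>Md\<bar>" for x using Md[of "partial i \<phi> x"] z1[of x] by (cases "x \<in> K") auto
  show ?thesis
    by (rule that[OF K z1 d0 d1 bp bd borel_measurable_continuous_onI[OF c0] borel_measurable_continuous_onI[OF c1]])
qed



definition eps :: "nat \<Rightarrow> real" where "eps N = inverse (real (Suc N))"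

lemma eps_pos: "eps N > 0" and eps_le1: "eps N \<le> 1"
  by (auto simp: eps_def field_simps)

lemma eps_lim: "eps \<longlonglongrightarrow> 0"
  unfolding eps_def by (rule LIMSEQ_inverse_real_of_nat)

lemma psi_lim:
  assumes "x \<noteq> 0"
  shows "(\<lambda>N. psi (eps N) x) \<longlonglongrightarrow> 0"
proof -
  have "norm x / 2 > 0" using assms by simp
  then have "eventually (\<lambda>N. eps N < norm x / 2) sequentially"
    using order_tendstoD(2)[OF eps_lim] by blast
  then have "eventually (\<lambda>N. psi (eps N) x = 0) sequentially"
    by (rule eventually_mono) (intro psi_far eps_pos, simp)
  then show ?thesis by (rule tendsto_eventually)
qed

lemma ball_measure_bound:
  assumes n2: "CARD('n) \<ge> 2" and e: "0 < e" "e \<le> 1"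
  shows "(8 / e) * measure lborel (ball (0::real^'n) (2 * e)) \<le> 8 * 2^CARD('n) * measure lborel (ball (0::real^'n) 1) * e"
proof -
  define n where "n = CARD('n)"
  define V where "V = measure lborel (ball (0::real^'n) 1)"
  have V0: "V \<ge> 0" by (simp add: V_def)
  have m: "measure lborel (ball (0::real^'n) (2 * e)) = (2 * e)^n * V"
    using ball_measure[of "2*e"] e by (simp add: n_def V_def)
  have "e^n = e * e^(n-1)" using n2 by (simp add: n_def power_eq_if)
  moreover have "e^(n-1) \<le> e^1" using n2 e by (intro power_decreasing) (auto simp: n_def)
  ultimately have "e^n \<le> e * e" using e by (simp add: mult_left_mono)
  then have "(8 / e) * ((2 * e)^n * V) \<le> (8/e) * (2^n * (e * e) * V)"
    using e V0 by (intro mult_left_mono mult_right_mono) (auto simp: power_mult_distrib)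
  also have "\<dots> = 8 * 2^n * V * e" using e by (simp add: field_simps)
  finally show ?thesis by (simp add: m n_def V_def)
qed



lemma weak_ibp:
  fixes f v \<phi> :: "real^'n \<Rightarrow> real"
  assumes n2: "CARD('n) \<ge> 2"
    and fUb: "(\<lambda>x. indicator (ball 0 1) x * f x) \<in> borel_measurable borel"
    and fB: "\<And>x. x \<in> ball 0 1 \<Longrightarrow> \<bar>f x\<bar> \<le> B"
    and fd: "\<And>x. x \<in> ball 0 1 \<Longrightarrow> x \<noteq> 0 \<Longrightarrow> f differentiable (at x)"
    and vdef: "\<And>x. v x = (if x \<in> ball 0 1 \<and> x \<noteq> 0 then partial i f x else 0)"
    and vC: "\<And>x. x \<in> ball 0 1 \<Longrightarrow> x \<noteq> 0 \<Longrightarrow> \<bar>partial i f x\<bar> \<le> C / norm x"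
    and vint: "integrable lborel v" and vb: "v \<in> borel_measurable borel"
    and tf: "test_fun (ball 0 1) \<phi>"
  shows "integral\<^sup>L lborel (\<lambda>x. indicator (ball 0 1) x * f x * partial i \<phi> x) = - integral\<^sup>L lborel (\<lambda>x. v x * \<phi> x)"
proof -
  obtain K Mp Md where K: "compact K" "K \<subseteq> ball 0 1" and pz: "\<And>x. x \<notin> K \<Longrightarrow> \<phi> x = 0"
    and dpz: "\<And>x. x \<notin> K \<Longrightarrow> partial i \<phi> x = 0"
    and pd: "\<And>x. \<phi> differentiable (at x)" and dpd: "\<And>x. partial i \<phi> differentiable (at x)"
    and Mp: "\<And>x. \<bar>\<phi> x\<bar> \<le> Mp" and Md: "\<And>x. \<bar>partial i \<phi> x\<bar> \<le> Md"
    and pb[measurable]: "\<phi> \<in> borel_measurable borel" and dpb[measurable]: "partial i \<phi> \<in> borel_measurable borel"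
    using test_fun_props[OF tf, of i] by metis
  define fU where "fU x = indicator (ball 0 1) x * f x" for x
  have fUb'[measurable]: "fU \<in> borel_measurable borel" using fUb by (simp add: fU_def[abs_def])
  have vb'[measurable]: "v \<in> borel_measurable borel" by (rule vb)
  have fUB: "\<bar>fU x\<bar> \<le> \<bar>B\<bar>" for x using fB[of x] by (auto simp: fU_def indicator_def)
  have fUz: "fU x = 0" if "norm x \<ge> 1" for x using that by (simp add: fU_def indicator_def)
  have Kb: "x \<in> K \<Longrightarrow> norm x < 1" for x using K(2) by auto
  define dp where "dp = partial i \<phi>"
  define T1 where "T1 N x = v x * (\<phi> x * (1 - psi (eps N) x))" for N x
  define T2 where "T2 N x = fU x * (dp x * (1 - psi (eps N) x))" for N x
  define T3 where "T3 N x = fU x * (\<phi> x * dpsi (eps N) i x)" for N x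
  have psi1: "\<bar>1 - psi e x\<bar> \<le> 1" for e x using psi_bounds[of e x] by auto
  have T1b[measurable]: "T1 N \<in> borel_measurable borel" for N unfolding T1_def by measurable
  have T2b[measurable]: "T2 N \<in> borel_measurable borel" for N unfolding T2_def dp_def by measurable
  have T3b[measurable]: "T3 N \<in> borel_measurable borel" for N unfolding T3_def by measurable
  have T1bnd: "\<bar>T1 N x\<bar> \<le> \<bar>Mp\<bar> * \<bar>v x\<bar>" for N x
  proof -
    have "\<bar>T1 N x\<bar> = \<bar>v x\<bar> * (\<bar>\<phi> x\<bar> * \<bar>1 - psi (eps N) x\<bar>)" by (simp add: T1_def abs_mult)
    also have "\<dots> \<le> \<bar>v x\<bar> * (\<bar>Mp\<bar> * 1)"
      using Mp[of x] psi1 by (intro mult_left_mono mult_mono) (auto intro: order_trans)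
    finally show ?thesis by (simp add: mult.commute)
  qed
  have T2bnd: "\<bar>T2 N x\<bar> \<le> \<bar>B\<bar> * \<bar>Md\<bar> * indicator (cball 0 1) x" for N x
  proof (cases "norm x \<ge> 1")
    case True then show ?thesis by (simp add: T2_def fUz indicator_def)
  next
    case False
    have "\<bar>T2 N x\<bar> = \<bar>fU x\<bar> * (\<bar>dp x\<bar> * \<bar>1 - psi (eps N) x\<bar>)" by (simp add: T2_def abs_mult)
    also have "\<dots> \<le> \<bar>B\<bar> * (\<bar>Md\<bar> * 1)"
      using fUB[of x] Md[of x] psi1 by (intro mult_mono) (auto simp: dp_def intro: order_trans)
    finally show ?thesis using False by (simp add: indicator_def)
  qed
  have T3bnd: "\<bar>T3 N x\<bar> \<le> \<bar>B\<bar> * \<bar>Mp\<bar> * ((8 / eps N) * indicator (ball 0 (2 * eps N)) x)" for N x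
  proof -
    have "\<bar>T3 N x\<bar> = \<bar>fU x\<bar> * (\<bar>\<phi> x\<bar> * \<bar>dpsi (eps N) i x\<bar>)" by (simp add: T3_def abs_mult)
    also have "\<dots> \<le> \<bar>B\<bar> * (\<bar>Mp\<bar> * ((8 / eps N) * indicator (ball 0 (2 * eps N)) x))"
      using fUB[of x] Mp[of x] dpsi_bound[OF eps_pos, of N i x]
      by (intro mult_mono) (auto intro: order_trans)
    finally show ?thesis by (simp add: mult_ac)
  qed
  have T3z: "T3 N x = 0" if "norm x > 1" for N x using that by (simp add: T3_def fUz)
  have T2z: "T2 N x = 0" if "norm x > 1" for N x using that by (simp add: T2_def fUz)
  have T2bnd': "\<bar>T2 N x\<bar> \<le> \<bar>B\<bar> * \<bar>Md\<bar>" for N x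
    using T2bnd[of N x] by (cases "x \<in> cball 0 1") (auto simp: indicator_def)
  have T3bnd': "\<bar>T3 N x\<bar> \<le> \<bar>B\<bar> * \<bar>Mp\<bar> * (8 / eps N)" for N x
    using T3bnd[of N x] eps_pos[of N] by (cases "x \<in> ball 0 (2 * eps N)") (auto simp: indicator_def)
  have T1i: "integrable lborel (T1 N)" for N
  proof (rule Bochner_Integration.integrable_bound)
    show "integrable lborel (\<lambda>x. \<bar>Mp\<bar> * \<bar>v x\<bar>)" using vint by (intro integrable_mult_right integrable_abs)
    show "AE x in lborel. norm (T1 N x) \<le> norm (\<bar>Mp\<bar> * \<bar>v x\<bar>)" using T1bnd by (intro AE_I2) simp
  qed simp
  have T2i: "integrable lborel (T2 N)" for N
    by (rule integrable_bounded_support[OF T2b[of N], of "\<bar>B\<bar> * \<bar>Md\<bar>" 1])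
       (use T2bnd' T2z in auto)
  have T3i: "integrable lborel (T3 N)" for N
    by (rule integrable_bounded_support[OF T3b[of N], of "\<bar>B\<bar> * \<bar>Mp\<bar> * (8 / eps N)" 1])
       (use T3bnd' T3z in auto)
  have key: "integral\<^sup>L lborel (T1 N) + integral\<^sup>L lborel (T2 N) - integral\<^sup>L lborel (T3 N) = 0" for N
  proof -
    define e where "e = eps N"
    have e0: "e > 0" using eps_pos by (simp add: e_def)
    define w where "w y = \<phi> y * (1 - psi e y)" for y
    define g where "g y = f y * w y" for y
    have omd: "(\<lambda>y. 1 - psi e y) differentiable (at x)" for x
      by (intro differentiable_diff differentiable_const psi_diff)
    have wd: "w differentiable (at x)" for x
      unfolding w_def[abs_def] by (intro differentiable_mult pd omd)
    have pw: "partial i w x = \<phi> x * (- dpsi e i x) + dp x * (1 - psi e x)" for x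
      unfolding w_def[abs_def] partial_mult[OF pd omd] partial_one_minus[OF psi_diff] partial_psi dp_def ..
    have pg: "g differentiable (at x) \<and> partial i g x = T1 N x + T2 N x - T3 N x" for x
    proof (cases "x \<in> K")
      case False
      have "open (- K)" using K(1) by (simp add: compact_imp_closed open_Compl)
      moreover have "g y = 0" if "y \<in> - K" for y using pz[of y] that by (simp add: g_def w_def)
      ultimately have "g differentiable (at x) \<and> partial i g x = 0"
        using partial_local_zero(1)[of "- K" x g] partial_local_zero(2)[of "- K" x g i] False by auto
      moreover have "T1 N x + T2 N x - T3 N x = 0"
        using pz[OF False] dpz[OF False] by (simp add: T1_def T2_def T3_def dp_def)
      ultimately show ?thesis by simp
    next
      case True
      show ?thesis
      proof (cases "norm x < e")
        case True
        have "g y = 0" if "y \<in> ball 0 e" for y using psi_small[OF e0, of y] that by (simp add: g_def w_def)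
        then have "g differentiable (at x) \<and> partial i g x = 0"
          using partial_local_zero(1)[of "ball 0 e" x g] partial_local_zero(2)[of "ball 0 e" x g i] True by auto
        moreover have "T1 N x + T2 N x - T3 N x = 0"
          using psi_small[OF e0 True] dpsi_small[OF e0 True] by (simp add: T1_def T2_def T3_def e_def)
        ultimately show ?thesis by simp
      next
        case False
        have xU: "x \<in> ball 0 1" using \<open>x \<in> K\<close> K(2) by auto
        have x0: "x \<noteq> 0" using False e0 by auto
        have gd: "g differentiable (at x)" unfolding g_def[abs_def] by (intro differentiable_mult fd[OF xU x0] wd)
        have "partial i g x = f x * partial i w x + partial i f x * w x"
          unfolding g_def[abs_def] by (rule partial_mult[OF fd[OF xU x0] wd])
        also have "\<dots> = T1 N x + T2 N x - T3 N x"
          using xU x0 by (simp add: pw T1_def T2_def T3_def vdef fU_def w_def e_def algebra_simps)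
        finally show ?thesis using gd by simp
      qed
    qed
    have T1bnd2: "\<bar>T1 N x\<bar> \<le> \<bar>Mp\<bar> * (\<bar>C\<bar> / e)" for x
    proof (cases "norm x < e")
      case True then show ?thesis using psi_small[OF e0 True] e0 by (simp add: T1_def e_def[symmetric])
    next
      case False
      have "\<bar>v x\<bar> \<le> \<bar>C\<bar> / e"
      proof (cases "x \<in> ball 0 1 \<and> x \<noteq> 0")
        case True
        then have "\<bar>v x\<bar> \<le> C / norm x" using vC by (simp add: vdef)
        also have "\<dots> \<le> \<bar>C\<bar> / norm x" by (simp add: divide_right_mono)
        also have "\<dots> \<le> \<bar>C\<bar> / e" using False e0 by (intro divide_left_mono mult_pos_pos) auto
        finally show ?thesis .
      qed (use e0 in \<open>auto simp: vdef\<close>)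
      then show ?thesis using T1bnd[of N x] by (metis abs_ge_zero mult_left_mono order_trans)
    qed
    define Mg where "Mg = \<bar>Mp\<bar> * (\<bar>C\<bar> / e) + \<bar>B\<bar> * \<bar>Md\<bar> + \<bar>B\<bar> * \<bar>Mp\<bar> * (8 / e)"
    have gbnd: "\<bar>partial i g x\<bar> \<le> Mg" for x
    proof -
      have a: "\<bar>T2 N x\<bar> \<le> \<bar>B\<bar> * \<bar>Md\<bar>" by (rule T2bnd')
      have "\<bar>T3 N x\<bar> \<le> \<bar>B\<bar> * \<bar>Mp\<bar> * (8 / e)"
        using T3bnd'[of N x] by (simp add: e_def)
      then show ?thesis using pg[of x] T1bnd2[of x] a unfolding Mg_def by (smt (verit))
    qed
    have gz: "g x = 0" if "norm x > 1" for x
    proof -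
      have "x \<notin> K" using Kb that by force
      then show ?thesis using pz by (simp add: g_def w_def)
    qed
    have "integral\<^sup>L lborel (partial i g) = 0"
      by (rule core_ibp(2)[of g i Mg 1]) (use pg gbnd gz in auto)
    moreover have "partial i g = (\<lambda>x. T1 N x + T2 N x - T3 N x)" using pg by auto
    ultimately show ?thesis using T1i T2i T3i by simp
  qed
  have L1: "(\<lambda>N. integral\<^sup>L lborel (T1 N)) \<longlonglongrightarrow> integral\<^sup>L lborel (\<lambda>x. v x * \<phi> x)"
  proof (rule integral_dominated_convergence[where w="\<lambda>x. \<bar>Mp\<bar> * \<bar>v x\<bar>"])
    show "integrable lborel (\<lambda>x. \<bar>Mp\<bar> * \<bar>v x\<bar>)" using vint by (intro integrable_mult_right integrable_abs)
    show "AE x in lborel. (\<lambda>N. T1 N x) \<longlonglongrightarrow> v x * \<phi> x"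
      using AE_lborel_singleton[of "0::real^'n"]
    proof (rule eventually_mono)
      fix x :: "real^'n" assume "x \<noteq> 0"
      have "(\<lambda>N. v x * (\<phi> x * (1 - psi (eps N) x))) \<longlonglongrightarrow> v x * (\<phi> x * (1 - 0))"
        by (intro tendsto_intros psi_lim[OF \<open>x \<noteq> 0\<close>])
      then show "(\<lambda>N. T1 N x) \<longlonglongrightarrow> v x * \<phi> x" by (simp add: T1_def)
    qed
    show "AE x in lborel. norm (T1 N x) \<le> \<bar>Mp\<bar> * \<bar>v x\<bar>" for N using T1bnd by (intro AE_I2) simp
  qed simp_all
  have L2: "(\<lambda>N. integral\<^sup>L lborel (T2 N)) \<longlonglongrightarrow> integral\<^sup>L lborel (\<lambda>x. fU x * dp x)"
  proof (rule integral_dominated_convergence[where w="\<lambda>x. \<bar>B\<bar> * \<bar>Md\<bar> * indicator (cball 0 1) x"])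
    show "integrable lborel (\<lambda>x. \<bar>B\<bar> * \<bar>Md\<bar> * indicator (cball (0::real^'n) 1) x)"
      by (intro integrable_mult_right integrable_real_indicator) (simp_all add: emeasure_lborel_cball_finite[unfolded infinity_ennreal_def])
    show "AE x in lborel. (\<lambda>N. T2 N x) \<longlonglongrightarrow> fU x * dp x"
      using AE_lborel_singleton[of "0::real^'n"]
    proof (rule eventually_mono)
      fix x :: "real^'n" assume "x \<noteq> 0"
      have "(\<lambda>N. fU x * (dp x * (1 - psi (eps N) x))) \<longlonglongrightarrow> fU x * (dp x * (1 - 0))"
        by (intro tendsto_intros psi_lim[OF \<open>x \<noteq> 0\<close>])
      then show "(\<lambda>N. T2 N x) \<longlonglongrightarrow> fU x * dp x" by (simp add: T2_def)
    qed
    show "AE x in lborel. norm (T2 N x) \<le> \<bar>B\<bar> * \<bar>Md\<bar> * indicator (cball 0 1) x" for N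
      using T2bnd by (intro AE_I2) simp
  qed (simp_all add: dp_def)
  define V where "V = measure lborel (ball (0::real^'n) 1)"
  have L3: "(\<lambda>N. integral\<^sup>L lborel (T3 N)) \<longlonglongrightarrow> 0"
  proof (rule Lim_null_comparison)
    show "(\<lambda>N. \<bar>B\<bar> * \<bar>Mp\<bar> * (8 * 2^CARD('n) * V * eps N)) \<longlonglongrightarrow> 0"
      using tendsto_mult_right_zero[OF eps_lim, of "\<bar>B\<bar> * \<bar>Mp\<bar> * (8 * 2^CARD('n) * V)"] by (simp add: mult_ac)
    show "\<forall>\<^sub>F N in sequentially. norm (integral\<^sup>L lborel (T3 N)) \<le> \<bar>B\<bar> * \<bar>Mp\<bar> * (8 * 2^CARD('n) * V * eps N)"
    proof (intro always_eventually allI)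
      fix N
      have ii: "integrable lborel (\<lambda>x. \<bar>B\<bar> * \<bar>Mp\<bar> * ((8 / eps N) * indicator (ball (0::real^'n) (2 * eps N)) x))"
        by (intro integrable_mult_right integrable_real_indicator) (simp_all add: emeasure_lborel_ball_finite[unfolded infinity_ennreal_def])
      have "norm (integral\<^sup>L lborel (T3 N)) \<le> integral\<^sup>L lborel (\<lambda>x. norm (T3 N x))"
        by (rule integral_norm_bound)
      also have "\<dots> \<le> integral\<^sup>L lborel (\<lambda>x. \<bar>B\<bar> * \<bar>Mp\<bar> * ((8 / eps N) * indicator (ball (0::real^'n) (2 * eps N)) x))"
        using T3i ii T3bnd by (intro integral_mono) auto
      also have "\<dots> = \<bar>B\<bar> * \<bar>Mp\<bar> * ((8 / eps N) * measure lborel (ball (0::real^'n) (2 * eps N)))"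
        by simp
      also have "\<dots> \<le> \<bar>B\<bar> * \<bar>Mp\<bar> * (8 * 2^CARD('n) * V * eps N)"
        using ball_measure_bound[OF n2 eps_pos eps_le1, of N] by (intro mult_left_mono) (auto simp: V_def)
      finally show "norm (integral\<^sup>L lborel (T3 N)) \<le> \<bar>B\<bar> * \<bar>Mp\<bar> * (8 * 2^CARD('n) * V * eps N)" .
    qed
  qed
  have "(\<lambda>N. integral\<^sup>L lborel (T1 N) + integral\<^sup>L lborel (T2 N) - integral\<^sup>L lborel (T3 N))
      \<longlonglongrightarrow> integral\<^sup>L lborel (\<lambda>x. v x * \<phi> x) + integral\<^sup>L lborel (\<lambda>x. fU x * dp x) - 0"
    by (intro tendsto_intros L1 L2 L3)
  then have "(\<lambda>N. 0) \<longlonglongrightarrow> integral\<^sup>L lborel (\<lambda>x. v x * \<phi> x) + integral\<^sup>L lborel (\<lambda>x. fU x * dp x)"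
    using key by simp
  then have "integral\<^sup>L lborel (\<lambda>x. v x * \<phi> x) + integral\<^sup>L lborel (\<lambda>x. fU x * dp x) = 0"
    using LIMSEQ_unique[OF tendsto_const] by metis
  moreover have "(\<lambda>x. indicator (ball 0 1) x * f x * partial i \<phi> x) = (\<lambda>x. fU x * dp x)"
    by (simp add: fU_def dp_def)
  ultimately show ?thesis by simp
qed



lemma borel_to_lebesgue: "f \<in> borel_measurable borel \<Longrightarrow> f \<in> borel_measurable lebesgue"
  by (rule measurable_completion) simp

lemma integrable_to_lebesgue:
  "f \<in> borel_measurable borel \<Longrightarrow> integrable lborel (f :: 'a::euclidean_space \<Rightarrow> real) \<Longrightarrow> integrable lebesgue f"
  by (subst integrable_completion) simp_all

lemma integral_to_lebesgue:
  "f \<in> borel_measurable borel \<Longrightarrow> integral\<^sup>L lebesgue (f :: 'a::euclidean_space \<Rightarrow> real) = integral\<^sup>L lborel f"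
  by (subst integral_completion) simp_all

lemma sob_generic:
  fixes f :: "real^'n \<Rightarrow> real"
  assumes n3: "CARD('n) \<ge> 3"
    and fB: "\<And>x. x \<in> ball 0 1 \<Longrightarrow> \<bar>f x\<bar> \<le> B"
    and fd: "\<And>x. x \<in> ball 0 1 \<Longrightarrow> x \<noteq> 0 \<Longrightarrow> f differentiable (at x)"
    and fC: "\<And>x i. x \<in> ball 0 1 \<Longrightarrow> x \<noteq> 0 \<Longrightarrow> \<bar>partial i f x\<bar> \<le> C / norm x"
  shows "sobolev_H12 (ball 0 1) f"
proof -
  define U0 :: "(real^'n) set" where "U0 = ball 0 1 - {0}"
  have oU0: "open U0" unfolding U0_def by (intro open_Diff) auto
  have U0m[measurable]: "U0 \<in> sets borel" using oU0 by simp
  have cont: "continuous_on U0 f"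
    using fd by (intro continuous_at_imp_continuous_on) (auto simp: U0_def intro: differentiable_imp_continuous_within)
  define f0 where "f0 x = indicator U0 x *\<^sub>R f x" for x
  have f0b[measurable]: "f0 \<in> borel_measurable borel"
    unfolding f0_def[abs_def] by (rule borel_measurable_continuous_on_indicator[OF U0m cont])
  have fUe: "(\<lambda>x. indicator (ball 0 1) x * f x) = (\<lambda>x. f0 x + indicator {0} x * f 0)"
    by (auto simp: fun_eq_iff f0_def U0_def indicator_def)
  have fUb[measurable]: "(\<lambda>x. indicator (ball 0 1) x * f x) \<in> borel_measurable borel"
    unfolding fUe by measurable
  have fUB: "\<bar>indicator (ball 0 1) x * f x\<bar> \<le> \<bar>B\<bar>" for x
    using fB[of x] by (auto simp: indicator_def)
  have L2f: "L2_on (ball 0 1) f"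
  proof -
    have "(\<lambda>x. indicator (ball 0 1) x *\<^sub>R f x) \<in> borel_measurable lebesgue"
      using borel_to_lebesgue[OF fUb] by simp
    moreover have "integrable lebesgue (\<lambda>x. indicator (ball 0 1) x *\<^sub>R (f x)^2)"
    proof -
      have e: "(\<lambda>x. indicator (ball 0 1) x *\<^sub>R (f x)^2) = (\<lambda>x. (indicator (ball 0 1) x * f x)^2)"
        by (auto simp: fun_eq_iff indicator_def)
      have b: "(\<lambda>x. (indicator (ball 0 1) x * f x)^2) \<in> borel_measurable borel" by measurable
      have "integrable lborel (\<lambda>x. (indicator (ball (0::real^'n) 1) x * f x)^2)"
      proof (rule integrable_bounded_support[OF b, of "B^2" 1])
        fix x :: "real^'n"
        show "\<bar>(indicator (ball 0 1) x * f x)^2\<bar> \<le> B^2"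
          using fUB[of x] by (simp add: power2_le_iff_abs_le abs_le_square_iff)
      qed (auto simp: indicator_def)
      then show ?thesis unfolding e by (rule integrable_to_lebesgue[OF b])
    qed
    ultimately show ?thesis unfolding L2_on_def set_borel_measurable_def set_integrable_def by simp
  qed
  have "\<exists>v. L2_on (ball 0 1) v \<and> (\<forall>\<phi>. test_fun (ball 0 1) \<phi> \<longrightarrow>
           (LINT x : ball 0 1 | lebesgue. f x * partial i \<phi> x) = - (LINT x : ball 0 1 | lebesgue. v x * \<phi> x))" for i
  proof -
    define v where "v x = (if x \<in> ball 0 1 \<and> x \<noteq> 0 then partial i f x else 0)" for x
    define e :: "real^'n" where "e = axis i 1"
    define h :: "nat \<Rightarrow> real" where "h N = inverse (real (Suc N))" for N
    define q where "q N x = indicator U0 x * ((f0 (x + h N *\<^sub>R e) - f0 x) / h N)" for N x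
    have qb[measurable]: "q N \<in> borel_measurable borel" for N unfolding q_def by measurable
    have hlim: "filterlim h (at 0) sequentially"
      unfolding filterlim_at h_def using LIMSEQ_inverse_real_of_nat by (auto intro!: always_eventually)
    have qlim: "(\<lambda>N. q N x) \<longlonglongrightarrow> v x" for x
    proof (cases "x \<in> U0")
      case False
      then have "q N x = 0" "v x = 0" for N by (auto simp: q_def v_def U0_def)
      then show ?thesis by simp
    next
      case True
      then have xU: "x \<in> ball 0 1" "x \<noteq> 0" by (auto simp: U0_def)
      obtain d where d: "d > 0" "ball x d \<subseteq> U0" using oU0 True open_contains_ball by blast
      have "((\<lambda>s. f (x + s *\<^sub>R e)) has_real_derivative partial i f x) (at 0)"
        using line_deriv[of f "frechet_derivative f (at x)" x 0 e] fd[OF xU]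
        by (simp add: frechet_derivative_works partial_def e_def)
      then have l: "((\<lambda>s. (f (x + s *\<^sub>R e) - f x) / s) \<longlongrightarrow> partial i f x) (at 0)"
        unfolding has_field_derivative_iff by simp
      from filterlim_compose[OF l hlim]
      have l2: "(\<lambda>N. (f (x + h N *\<^sub>R e) - f x) / h N) \<longlonglongrightarrow> partial i f x" by (simp add: o_def)
      have "eventually (\<lambda>N. h N < d) sequentially"
        using hlim d(1) unfolding filterlim_at by (auto dest: order_tendstoD(2))
      then have "eventually (\<lambda>N. (f (x + h N *\<^sub>R e) - f x) / h N = q N x) sequentially"
      proof (rule eventually_mono)
        fix N assume "h N < d"
        then have "x + h N *\<^sub>R e \<in> ball x d" using d(1) by (simp add: e_def dist_norm h_def)
        then have "x + h N *\<^sub>R e \<in> U0" using d(2) by auto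
        then show "(f (x + h N *\<^sub>R e) - f x) / h N = q N x" using True by (simp add: q_def f0_def)
      qed
      then have "(\<lambda>N. q N x) \<longlonglongrightarrow> partial i f x" using l2 by (rule Lim_transform_eventually[rotated])
      then show ?thesis using xU by (simp add: v_def)
    qed
    have vb[measurable]: "v \<in> borel_measurable borel"
      by (rule borel_measurable_LIMSEQ_real[OF qlim qb])
    have vbnd: "\<bar>v x\<bar> \<le> \<bar>C\<bar> * (indicator (ball 0 1) x / (norm x)^2)" for x
    proof (cases "x \<in> ball 0 1 \<and> x \<noteq> 0")
      case True
      then have n: "0 < norm x" "norm x < 1" by auto
      have "\<bar>v x\<bar> \<le> C / norm x" using fC True by (simp add: v_def)
      also have "\<dots> \<le> \<bar>C\<bar> / norm x" using n by (simp add: divide_right_mono)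
      also have "\<dots> \<le> \<bar>C\<bar> / (norm x)^2" using n
        by (intro divide_left_mono) (auto simp: power2_eq_square mult_le_cancel_left1 intro: mult_pos_pos)
      finally show ?thesis using True by (simp add: indicator_def)
    qed (auto simp: v_def)
    have isq: "integrable lborel (\<lambda>x::real^'n. indicator (ball 0 1) x / (norm x)^2)"
      by (rule inv_sq_integrable[OF n3])
    have vint: "integrable lborel v"
    proof (rule Bochner_Integration.integrable_bound)
      show "integrable lborel (\<lambda>x::real^'n. \<bar>C\<bar> * (indicator (ball 0 1) x / (norm x)^2))"
        using isq by (rule integrable_mult_right)
      show "AE x in lborel. norm (v x) \<le> norm (\<bar>C\<bar> * (indicator (ball 0 1) x / (norm x)^2))"
        using vbnd by (intro AE_I2) (auto intro: order_trans)
    qed simp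
    have v2int: "integrable lborel (\<lambda>x. (v x)^2)"
    proof (rule Bochner_Integration.integrable_bound)
      show "integrable lborel (\<lambda>x::real^'n. C^2 * (indicator (ball 0 1) x / (norm x)^2))"
        using isq by (rule integrable_mult_right)
      show "AE x in lborel. norm ((v x)^2) \<le> norm (C^2 * (indicator (ball 0 1) x / (norm x)^2))"
      proof (intro AE_I2)
        fix x :: "real^'n"
        show "norm ((v x)^2) \<le> norm (C^2 * (indicator (ball 0 1) x / (norm x)^2))"
        proof (cases "x \<in> ball 0 1 \<and> x \<noteq> 0")
          case True
          then have n: "0 < norm x" "norm x < 1" by auto
          have vb1: "\<bar>v x\<bar> \<le> \<bar>C\<bar> / norm x" using fC True by (simp add: v_def) (meson abs_ge_self divide_right_mono norm_ge_zero order_trans)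
          have "(v x)^2 \<le> (\<bar>C\<bar> / norm x)^2" using power_mono[OF vb1 abs_ge_zero, of 2] by simp
          also have "\<dots> = C^2 * (1 / (norm x)^2)" by (simp add: power_divide)
          finally show ?thesis using True by (simp add: indicator_def)
        qed (auto simp: v_def)
      qed
    qed simp
    have L2v: "L2_on (ball 0 1) v"
    proof -
      have e1: "(\<lambda>x. indicator (ball 0 1) x *\<^sub>R v x) = v" by (auto simp: fun_eq_iff v_def indicator_def)
      have e2: "(\<lambda>x. indicator (ball 0 1) x *\<^sub>R (v x)^2) = (\<lambda>x. (v x)^2)" by (auto simp: fun_eq_iff v_def indicator_def)
      have b2: "(\<lambda>x. (v x)^2) \<in> borel_measurable borel" by measurable
      have m1: "v \<in> borel_measurable lebesgue" by (rule borel_to_lebesgue[OF vb])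
      have m2: "integrable lebesgue (\<lambda>x. (v x)^2)" by (rule integrable_to_lebesgue[OF b2 v2int])
      show ?thesis unfolding L2_on_def set_borel_measurable_def set_integrable_def e1 e2 using m1 m2 by blast
    qed
    have weak: "(LINT x : ball 0 1 | lebesgue. f x * partial i \<phi> x) = - (LINT x : ball 0 1 | lebesgue. v x * \<phi> x)"
      if tf: "test_fun (ball 0 1) \<phi>" for \<phi>
    proof -
      obtain K Mp Md where "\<phi> \<in> borel_measurable borel" "partial i \<phi> \<in> borel_measurable borel"
        "\<And>x. x \<notin> K \<Longrightarrow> \<phi> x = 0"
        using test_fun_props[OF tf, of i] by metis
      then have pb[measurable]: "\<phi> \<in> borel_measurable borel" and dpb[measurable]: "partial i \<phi> \<in> borel_measurable borel"
        by auto
      have "(LINT x : ball 0 1 | lebesgue. f x * partial i \<phi> x) = integral\<^sup>L lebesgue (\<lambda>x. indicator (ball 0 1) x * f x * partial i \<phi> x)"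
        unfolding set_lebesgue_integral_def by (simp add: mult_ac)
      also have "\<dots> = integral\<^sup>L lborel (\<lambda>x. indicator (ball 0 1) x * f x * partial i \<phi> x)"
        by (rule integral_to_lebesgue) measurable
      also have "\<dots> = - integral\<^sup>L lborel (\<lambda>x. v x * \<phi> x)"
        by (rule weak_ibp[OF _ fUb fB fd v_def fC vint vb tf]) (use n3 in auto)
      also have "integral\<^sup>L lborel (\<lambda>x. v x * \<phi> x) = integral\<^sup>L lebesgue (\<lambda>x. v x * \<phi> x)"
        by (rule integral_to_lebesgue[symmetric]) measurable
      also have "\<dots> = (LINT x : ball 0 1 | lebesgue. v x * \<phi> x)"
        unfolding set_lebesgue_integral_def by (rule Bochner_Integration.integral_cong) (auto simp: v_def indicator_def)
      finally show ?thesis .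
    qed
    show ?thesis using L2v weak by blast
  qed
  then show ?thesis unfolding sobolev_H12_def using L2f by blast
qed



definition DB :: "(real \<Rightarrow> real) \<Rightarrow> real \<Rightarrow> real \<Rightarrow> bool" where
  "DB h A B \<longleftrightarrow> (\<exists>D. (h has_real_derivative D) (at 0) \<and> \<bar>D\<bar> \<le> B) \<and> \<bar>h 0\<bar> \<le> A"

lemma DB_nonneg: "DB h A B \<Longrightarrow> 0 \<le> A \<and> 0 \<le> B"
  unfolding DB_def by (auto intro: order_trans[OF abs_ge_zero])

lemma DB_mono: "DB h A B \<Longrightarrow> A \<le> A' \<Longrightarrow> B \<le> B' \<Longrightarrow> DB h A' B'"
  unfolding DB_def by (auto intro: order_trans)

lemma DB_const: "DB (\<lambda>t. a) \<bar>a\<bar> 0"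
  unfolding DB_def by (auto intro!: exI[of _ 0] derivative_eq_intros)

lemma DB_mult:
  assumes "DB h1 A1 B1" "DB h2 A2 B2"
  shows "DB (\<lambda>t. h1 t * h2 t) (A1 * A2) (A1 * B2 + B1 * A2)"
proof -
  from assms obtain D1 D2 where d: "(h1 has_real_derivative D1) (at 0)" "\<bar>D1\<bar> \<le> B1"
    "(h2 has_real_derivative D2) (at 0)" "\<bar>D2\<bar> \<le> B2" "\<bar>h1 0\<bar> \<le> A1" "\<bar>h2 0\<bar> \<le> A2"
    unfolding DB_def by blast
  have "((\<lambda>t. h1 t * h2 t) has_real_derivative h1 0 * D2 + D1 * h2 0) (at 0)"
    using DERIV_mult'[OF d(1) d(3)] by simp
  moreover have "\<bar>h1 0 * D2 + D1 * h2 0\<bar> \<le> A1 * B2 + B1 * A2"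
  proof -
    have "\<bar>h1 0 * D2 + D1 * h2 0\<bar> \<le> \<bar>h1 0\<bar> * \<bar>D2\<bar> + \<bar>D1\<bar> * \<bar>h2 0\<bar>"
      by (metis abs_mult abs_triangle_ineq)
    also have "\<dots> \<le> A1 * B2 + B1 * A2"
      using d by (intro add_mono mult_mono) auto
    finally show ?thesis .
  qed
  moreover have "\<bar>h1 0 * h2 0\<bar> \<le> A1 * A2"
    using d by (simp add: abs_mult mult_mono)
  ultimately show ?thesis unfolding DB_def by blast
qed

lemma DB_add:
  assumes "DB h1 A1 B1" "DB h2 A2 B2"
  shows "DB (\<lambda>t. h1 t + h2 t) (A1 + A2) (B1 + B2)"
proof -
  from assms obtain D1 D2 where d: "(h1 has_real_derivative D1) (at 0)" "\<bar>D1\<bar> \<le> B1"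
    "(h2 has_real_derivative D2) (at 0)" "\<bar>D2\<bar> \<le> B2" "\<bar>h1 0\<bar> \<le> A1" "\<bar>h2 0\<bar> \<le> A2"
    unfolding DB_def by blast
  have "((\<lambda>t. h1 t + h2 t) has_real_derivative D1 + D2) (at 0)"
    using DERIV_add[OF d(1) d(3)] by simp
  moreover have "\<bar>D1 + D2\<bar> \<le> B1 + B2" using d by linarith
  moreover have "\<bar>h1 0 + h2 0\<bar> \<le> A1 + A2" using d by linarith
  ultimately show ?thesis unfolding DB_def by blast
qed

lemma DB_sum:
  assumes "finite S" "\<And>l. l \<in> S \<Longrightarrow> DB (h l) (A l) (B l)"
  shows "DB (\<lambda>t. \<Sum>l\<in>S. h l t) (\<Sum>l\<in>S. A l) (\<Sum>l\<in>S. B l)"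
  using assms
proof (induction S rule: finite_induct)
  case empty
  then show ?case using DB_const[of 0] by simp
next
  case (insert a S)
  then show ?case by (simp add: DB_add)
qed

lemma DB_compose:
  assumes "DB h A B" "(g has_real_derivative d) (at (h 0))" "\<bar>d\<bar> \<le> L" "\<bar>g (h 0)\<bar> \<le> Ag"
  shows "DB (\<lambda>t. g (h t)) Ag (L * B)"
proof -
  from assms(1) obtain D where d: "(h has_real_derivative D) (at 0)" "\<bar>D\<bar> \<le> B"
    unfolding DB_def by blast
  have "((\<lambda>t. g (h t)) has_real_derivative d * D) (at 0)"
    using DERIV_chain2[OF assms(2) d(1)] by simp
  moreover have "\<bar>d * D\<bar> \<le> L * B" using d assms(3) by (simp add: abs_mult mult_mono)
  ultimately show ?thesis using assms(4) unfolding DB_def by blast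
qed

lemma DB_sin: "DB h A B \<Longrightarrow> DB (\<lambda>t. sin (h t)) 1 B"
  using DB_compose[of h A B sin "cos (h 0)" 1 1] by (auto intro!: derivative_eq_intros)

lemma DB_cos: "DB h A B \<Longrightarrow> DB (\<lambda>t. cos (h t)) 1 B"
  using DB_compose[of h A B cos "- sin (h 0)" 1 1] by (auto intro!: derivative_eq_intros)

lemma DB_power:
  assumes "DB h A B" "A \<le> 1"
  shows "DB (\<lambda>t. h t ^ n) 1 (real n * B)"
proof (induction n)
  case 0
  then show ?case using DB_const[of 1] by simp
next
  case (Suc n)
  have "DB (\<lambda>t. h t * h t ^ n) (A * 1) (A * (real n * B) + B * 1)"
    by (rule DB_mult[OF assms(1) Suc])
  moreover have "A * 1 \<le> 1" using assms by simp
  moreover have "A * (real n * B) + B * 1 \<le> real (Suc n) * B"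
  proof -
    have "0 \<le> A" "0 \<le> B" using DB_nonneg[OF assms(1)] by auto
    then have "A * (real n * B) \<le> 1 * (real n * B)" using assms(2) by (intro mult_right_mono) auto
    then show ?thesis by (simp add: algebra_simps)
  qed
  ultimately show ?case by (auto intro: DB_mono)
qed

lemma DB_prod:
  assumes "finite S" "\<And>q. q \<in> S \<Longrightarrow> DB (h q) 1 (B q)"
  shows "DB (\<lambda>t. \<Prod>q\<in>S. h q t) 1 (\<Sum>q\<in>S. B q)"
  using assms
proof (induction S rule: finite_induct)
  case empty
  then show ?case using DB_const[of 1] by simp
next
  case (insert a S)
  then have "DB (\<lambda>t. h a t * (\<Prod>q\<in>S. h q t)) (1 * 1) (1 * (\<Sum>q\<in>S. B q) + B a * 1)"
    by (intro DB_mult) auto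
  then show ?case using insert by (simp add: add.commute)
qed



lemma DB_norm_line:
  fixes x :: "real^'n"
  assumes "x \<noteq> 0"
  shows "DB (\<lambda>t. norm (x + t *\<^sub>R axis i 1)) (norm x) 1"
proof -
  have "(norm has_derivative (\<lambda>h. h \<bullet> sgn x)) (at (x + 0 *\<^sub>R axis i 1))"
    using has_derivative_norm[OF assms] by simp
  from line_deriv[OF this]
  have d: "((\<lambda>s. norm (x + s *\<^sub>R axis i 1)) has_real_derivative (axis i 1 \<bullet> sgn x)) (at 0)" .
  have "\<bar>axis i 1 \<bullet> sgn x\<bar> \<le> norm (axis i (1::real)) * norm (sgn x)" by (rule Cauchy_Schwarz_ineq2)
  also have "\<dots> = 1" using assms by (simp add: norm_sgn)
  finally show ?thesis using d unfolding DB_def by auto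
qed

lemma DB_comp_line:
  fixes x :: "real^'n"
  assumes "x \<noteq> 0"
  shows "DB (\<lambda>t. (x + t *\<^sub>R axis i 1)$q / norm (x + t *\<^sub>R axis i 1)) 1 (2 / norm x)"
proof -
  obtain E where E: "((\<lambda>t. norm (x + t *\<^sub>R axis i 1)) has_real_derivative E) (at 0)" "\<bar>E\<bar> \<le> 1"
    using DB_norm_line[OF assms, of i] unfolding DB_def by auto
  define a where "a = axis i (1::real) $ q"
  have a1: "\<bar>a\<bar> \<le> 1" by (simp add: a_def axis_def)
  have N: "((\<lambda>t. (x + t *\<^sub>R axis i 1)$q) has_real_derivative a) (at 0)"
    by (auto simp: a_def intro!: derivative_eq_intros)
  have r0: "norm x > 0" using assms by simp
  have "((\<lambda>t. (x + t *\<^sub>R axis i 1)$q / norm (x + t *\<^sub>R axis i 1)) has_real_derivative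
          (a * norm x - x$q * E) / (norm x * norm x)) (at 0)"
    using DERIV_divide[OF N E(1)] r0 by simp
  moreover have "\<bar>(a * norm x - x$q * E) / (norm x * norm x)\<bar> \<le> 2 / norm x"
  proof -
    have "\<bar>a * norm x - x$q * E\<bar> \<le> \<bar>a\<bar> * norm x + \<bar>x$q\<bar> * \<bar>E\<bar>"
      by (metis abs_mult abs_triangle_ineq4 abs_norm_cancel)
    also have "\<dots> \<le> 1 * norm x + norm x * 1"
      using a1 E(2) component_le_norm_cart[of x q] by (intro add_mono mult_mono) auto
    finally have "\<bar>a * norm x - x$q * E\<bar> \<le> 2 * norm x" by simp
    then have "\<bar>a * norm x - x$q * E\<bar> / (norm x * norm x) \<le> 2 * norm x / (norm x * norm x)"
      using r0 by (intro divide_right_mono) auto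
    then show ?thesis using r0 by (simp add: abs_div)
  qed
  moreover have "\<bar>x$q / norm x\<bar> \<le> 1"
    using component_le_norm_cart[of x q] r0 by (simp add: abs_div divide_le_eq_1)
  ultimately show ?thesis unfolding DB_def by auto
qed

lemma DB_monomial_line:
  fixes x :: "real^'n"
  assumes "x \<noteq> 0"
  shows "DB (\<lambda>t. monomial_fun a ((1 / norm (x + t *\<^sub>R axis i 1)) *\<^sub>R (x + t *\<^sub>R axis i 1)))
            1 (real (sum a UNIV) * (2 / norm x))"
proof -
  have "DB (\<lambda>t. \<Prod>q\<in>UNIV. ((x + t *\<^sub>R axis i 1)$q / norm (x + t *\<^sub>R axis i 1)) ^ a q) 1
          (\<Sum>q\<in>UNIV. real (a q) * (2 / norm x))"
    by (intro DB_prod DB_power[OF DB_comp_line[OF assms]]) auto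
  then show ?thesis
    by (simp add: monomial_fun_def sum_distrib_right[symmetric] divide_inverse mult.commute)
qed

lemma finite_multi_index: "finite {a :: 'n::finite \<Rightarrow> nat. sum a UNIV = k}"
proof (rule finite_subset)
  show "{a :: 'n \<Rightarrow> nat. sum a UNIV = k} \<subseteq> {a. \<forall>q. (q \<in> UNIV \<longrightarrow> a q \<in> {..k}) \<and> (q \<notin> UNIV \<longrightarrow> a q = 0)}"
  proof (rule subsetI)
    fix a :: "'n \<Rightarrow> nat" assume "a \<in> {a. sum a UNIV = k}"
    then have "a q \<le> k" for q using member_le_sum[of q UNIV a] by auto
    then show "a \<in> {a. \<forall>q. (q \<in> UNIV \<longrightarrow> a q \<in> {..k}) \<and> (q \<notin> UNIV \<longrightarrow> a q = 0)}" by auto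
  qed
  show "finite {a :: 'n \<Rightarrow> nat. \<forall>q. (q \<in> UNIV \<longrightarrow> a q \<in> {..k}) \<and> (q \<notin> UNIV \<longrightarrow> a q = 0)}"
    by (rule finite_set_of_finite_funs) auto
qed

lemma DB_poly_line:
  fixes x :: "real^'n" and cf :: "('n \<Rightarrow> nat) \<Rightarrow> real"
  assumes "x \<noteq> 0"
  shows "DB (\<lambda>t. \<Sum>a\<in>{a. sum a UNIV = k}. cf a * monomial_fun a ((1 / norm (x + t *\<^sub>R axis i 1)) *\<^sub>R (x + t *\<^sub>R axis i 1)))
            (\<Sum>a\<in>{a. sum a UNIV = k}. \<bar>cf a\<bar>) ((\<Sum>a\<in>{a. sum a UNIV = k}. \<bar>cf a\<bar>) * (2 * real k) / norm x)"
proof -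
  have "DB (\<lambda>t. \<Sum>a\<in>{a. sum a UNIV = k}. cf a * monomial_fun a ((1 / norm (x + t *\<^sub>R axis i 1)) *\<^sub>R (x + t *\<^sub>R axis i 1)))
            (\<Sum>a\<in>{a. sum a UNIV = k}. \<bar>cf a\<bar> * 1) (\<Sum>a\<in>{a::'n\<Rightarrow>nat. sum a UNIV = k}. \<bar>cf a\<bar> * (real (sum a UNIV) * (2 / norm x)) + 0 * 1)"
    by (intro DB_sum finite_multi_index DB_mult DB_const DB_monomial_line[OF assms])
  moreover have "(\<Sum>a\<in>{a::'n\<Rightarrow>nat. sum a UNIV = k}. \<bar>cf a\<bar> * (real (sum a UNIV) * (2 / norm x)) + 0 * 1)
      = (\<Sum>a\<in>{a. sum a UNIV = k}. \<bar>cf a\<bar>) * (2 * real k) / norm x"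
  proof -
    have "(\<Sum>a\<in>{a::'n\<Rightarrow>nat. sum a UNIV = k}. \<bar>cf a\<bar> * (real (sum a UNIV) * (2 / norm x)) + 0 * 1)
        = (\<Sum>a\<in>{a::'n\<Rightarrow>nat. sum a UNIV = k}. \<bar>cf a\<bar> * (2 * real k) / norm x)"
      by (rule sum.cong) auto
    also have "\<dots> = (\<Sum>a\<in>{a. sum a UNIV = k}. \<bar>cf a\<bar>) * (2 * real k) / norm x"
      by (simp add: sum_distrib_right sum_divide_distrib)
    finally show ?thesis .
  qed
  ultimately show ?thesis by simp
qed



lemma Rmat_cases:
  "(\<forall>t. Rmat m t j l = cos t) \<or> (\<forall>t. Rmat m t j l = - sin t) \<or> (\<forall>t. Rmat m t j l = sin t) \<or> (\<forall>t. Rmat m t j l = 0)"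
proof (cases "j < 2*m \<and> l < 2*m \<and> j div 2 = l div 2")
  case False
  then have "\<forall>t. Rmat m t j l = 0" unfolding Rmat_def by auto
  then show ?thesis by blast
next
  case True
  have j: "j mod 2 = 0 \<or> j mod 2 = 1" and l: "l mod 2 = 0 \<or> l mod 2 = 1" by auto
  show ?thesis using j l True by (elim disjE) (simp_all add: Rmat_def Dblock_def)
qed

lemma DB_Rmat:
  assumes "DB h A B"
  shows "DB (\<lambda>t. Rmat m (h t) j l) 1 B"
proof -
  have B0: "0 \<le> B" using DB_nonneg[OF assms] by simp
  consider "\<forall>t. Rmat m t j l = cos t" | "\<forall>t. Rmat m t j l = - sin t" | "\<forall>t. Rmat m t j l = sin t" | "\<forall>t. Rmat m t j l = 0"
    using Rmat_cases by blast
  then show ?thesis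
  proof cases
    case 1 then show ?thesis using DB_cos[OF assms] by simp
  next
    case 2
    have "DB (\<lambda>t. (-1) * sin (h t)) (\<bar>-1\<bar> * 1) (\<bar>-1\<bar> * B + 0 * 1)"
      by (intro DB_mult DB_const DB_sin[OF assms])
    then show ?thesis using 2 by simp
  next
    case 3 then show ?thesis using DB_sin[OF assms] by simp
  next
    case 4 then show ?thesis using DB_mono[OF DB_const[of 0], of 1 B] B0 by simp
  qed
qed

lemma Rmat_differentiable: "(\<lambda>t. Rmat m t j l) differentiable (at t)"
proof -
  consider "\<forall>t. Rmat m t j l = cos t" | "\<forall>t. Rmat m t j l = - sin t" | "\<forall>t. Rmat m t j l = sin t" | "\<forall>t. Rmat m t j l = 0"
    using Rmat_cases by blast
  then show ?thesis
  proof cases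
    case 1 then have e: "(\<lambda>t. Rmat m t j l) = cos" by auto
    have "(cos has_real_derivative - sin t) (at t)" by (rule DERIV_cos)
    then show ?thesis unfolding e real_differentiable_def by blast
  next
    case 2 then have e: "(\<lambda>t. Rmat m t j l) = (\<lambda>t. - sin t)" by auto
    have "((\<lambda>t. - sin t) has_real_derivative - cos t) (at t)" by (intro DERIV_minus DERIV_sin)
    then show ?thesis unfolding e real_differentiable_def by blast
  next
    case 3 then have e: "(\<lambda>t. Rmat m t j l) = sin" by auto
    have "(sin has_real_derivative cos t) (at t)" by (rule DERIV_sin)
    then show ?thesis unfolding e real_differentiable_def by blast
  next
    case 4 then have "(\<lambda>t. Rmat m t j l) = (\<lambda>t. 0)" by auto
    then show ?thesis by simp
  qed
qed

lemma prod_differentiable: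
  assumes "\<And>q. q \<in> S \<Longrightarrow> f q differentiable (at x)"
  shows "(\<lambda>y. \<Prod>q\<in>S. f q y :: real) differentiable (at x)"
proof -
  have "(f q has_derivative frechet_derivative (f q) (at x)) (at x)" if "q \<in> S" for q
    using assms[OF that] by (simp only: frechet_derivative_works)
  note d = has_derivative_prod[OF this]
  show ?thesis unfolding differentiable_def by (rule exI, rule d)
qed

lemma comp_differentiable: "(\<lambda>y::real^'n. y$q) differentiable (at x)"
proof -
  have "((\<lambda>y::real^'n. y$q) has_derivative (\<lambda>y. y$q)) (at x)"
    by (intro bounded_linear_imp_has_derivative) (simp add: bounded_linear_vec_nth)
  then show ?thesis unfolding differentiable_def by (intro exI)
qed

lemma poly_differentiable:
  fixes cf :: "('n::finite \<Rightarrow> nat) \<Rightarrow> real"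
  shows "(\<lambda>y::real^'n. \<Sum>a\<in>{a. sum a UNIV = k}. cf a * monomial_fun a y) differentiable (at x)"
  unfolding monomial_fun_def
  by (intro differentiable_sum ballI differentiable_mult differentiable_const prod_differentiable
      differentiable_power comp_differentiable finite_multi_index)

lemma C2_facts:
  assumes "C2_on_unit \<Phi>"
  obtains \<Phi>1 M1 where "\<And>r. 0 < r \<Longrightarrow> r < 1 \<Longrightarrow> (\<Phi> has_real_derivative \<Phi>1 r) (at r)"
    "\<And>r. 0 < r \<Longrightarrow> r < 1 \<Longrightarrow> \<bar>\<Phi>1 r\<bar> \<le> M1"
proof -
  from assms obtain \<Phi>1 \<Phi>2 where d1: "\<forall>r\<in>{0..1}. (\<Phi> has_real_derivative \<Phi>1 r) (at r within {0..1})"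
    and d2: "\<forall>r\<in>{0..1}. (\<Phi>1 has_real_derivative \<Phi>2 r) (at r within {0..1})"
    unfolding C2_on_unit_def by blast
  have c: "continuous_on {0..1} \<Phi>1"
    unfolding continuous_on_eq_continuous_within using d2 DERIV_continuous by blast
  have "compact (\<Phi>1 ` {0..1})" by (rule compact_continuous_image[OF c]) auto
  then obtain M1 where M1: "\<And>y. y \<in> \<Phi>1 ` {0..1} \<Longrightarrow> norm y \<le> M1" using compact_imp_bounded bounded_iff by metis
  show ?thesis
  proof (rule that)
    fix r :: real assume r: "0 < r" "r < 1"
    have "(\<Phi> has_real_derivative \<Phi>1 r) (at r within {0..1})" using d1 r by auto
    then show "(\<Phi> has_real_derivative \<Phi>1 r) (at r)" using at_within_Icc_at[of 0 r 1] r by simp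
    show "\<bar>\<Phi>1 r\<bar> \<le> M1" using M1[of "\<Phi>1 r"] r by auto
  qed
qed



lemma real_comp_diff:
  fixes f :: "'a::real_normed_vector \<Rightarrow> real"
  assumes "f differentiable (at x)" "(g has_real_derivative d) (at (f x))"
  shows "(\<lambda>y. g (f y)) differentiable (at x)"
proof -
  have "g differentiable (at (f x))" using assms(2) real_differentiable_def by blast
  from differentiable_chain_at[OF assms(1) this] show ?thesis by (simp add: o_def)
qed

lemma spec_props:
  fixes F :: "real^'n::finite \<Rightarrow> nat \<Rightarrow> real" and cf :: "nat \<Rightarrow> ('n \<Rightarrow> nat) \<Rightarrow> real"
    and \<Phi> \<Phi>1 :: "real \<Rightarrow> real" and x :: "real^'n"
  assumes cf: "\<And>l y. l < 2*m \<Longrightarrow> F y l = (\<Sum>a\<in>{a. sum a UNIV = k}. cf l a * monomial_fun a y)"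
    and P1: "\<And>r. 0 < r \<Longrightarrow> r < 1 \<Longrightarrow> (\<Phi> has_real_derivative \<Phi>1 r) (at r)"
    and M1: "\<And>r. 0 < r \<Longrightarrow> r < 1 \<Longrightarrow> \<bar>\<Phi>1 r\<bar> \<le> M1"
    and G_def: "\<And>y. G y = (if j < 2*m then (\<Sum>l<2*m. Rmat m (c * ln (norm y)) j l * F ((1 / norm y) *\<^sub>R y) l) * sin (\<Phi> (norm y))
                       else if j = 2*m then cos (\<Phi> (norm y)) else 0)"
    and S_def: "S = (\<Sum>l<2*m. \<Sum>a\<in>{a. sum a UNIV = k}. \<bar>cf l a\<bar>)"
    and K_def: "K = S * (M1 + 2 * real k + \<bar>c\<bar>) + M1"
    and x: "x \<noteq> 0" "norm x < 1"
  shows "G differentiable (at x)" "DB (\<lambda>t. G (x + t *\<^sub>R axis i 1)) (S + 1) (K / norm x)"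
proof -
  define r where "r = norm x"
  have r: "0 < r" "r < 1" using x by (auto simp: r_def)
  have M10: "0 \<le> M1" using M1[of "1/2"] by auto
  have S0: "0 \<le> S" unfolding S_def by (intro sum_nonneg) auto
  have nd: "norm differentiable (at x)" by (rule differentiable_norm_at[OF x(1)])
  have Pd: "(\<lambda>y. \<Phi> (norm y)) differentiable (at x)" by (rule real_comp_diff[OF nd P1[OF r[unfolded r_def]]])
  have sPd: "(\<lambda>y. sin (\<Phi> (norm y))) differentiable (at x)" by (rule real_comp_diff[OF Pd DERIV_sin])
  have cPd: "(\<lambda>y. cos (\<Phi> (norm y))) differentiable (at x)" by (rule real_comp_diff[OF Pd DERIV_cos])
  have lnd: "(\<lambda>y. c * ln (norm y)) differentiable (at x)"
    by (intro differentiable_mult differentiable_const real_comp_diff[OF nd DERIV_ln]) (use r in \<open>simp add: r_def\<close>)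
  have Rd: "(\<lambda>y. Rmat m (c * ln (norm y)) j l) differentiable (at x)" for l
    using differentiable_chain_at[OF lnd Rmat_differentiable[of m j l]] by (simp add: o_def)
  have invd0: "(\<lambda>y. inverse (norm y)) differentiable (at x)"
    by (rule real_comp_diff[OF nd DERIV_inverse]) (use r in \<open>auto simp: r_def\<close>)
  then have invd: "(\<lambda>y. 1 / norm y) differentiable (at x)" by (simp add: inverse_eq_divide)
  have sigd: "(\<lambda>y::real^'n. (1 / norm y) *\<^sub>R y) differentiable (at x)"
    by (intro differentiable_scaleR invd differentiable_ident)
  have Fd: "(\<lambda>y. F ((1 / norm y) *\<^sub>R y) l) differentiable (at x)" if "l < 2*m" for l
  proof -
    have "(\<lambda>y. \<Sum>a\<in>{a. sum a UNIV = k}. cf l a * monomial_fun a y) differentiable (at ((1 / norm x) *\<^sub>R x))"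
      by (rule poly_differentiable)
    from differentiable_chain_at[OF sigd this] show ?thesis using cf[OF that] by (simp add: o_def)
  qed
  show "G differentiable (at x)"
  proof -
    have "(\<lambda>y. if j < 2*m then (\<Sum>l<2*m. Rmat m (c * ln (norm y)) j l * F ((1 / norm y) *\<^sub>R y) l) * sin (\<Phi> (norm y))
                       else if j = 2*m then cos (\<Phi> (norm y)) else 0) differentiable (at x)"
      by (cases "j < 2*m"; cases "j = 2*m")
         (simp_all add: cPd, (intro differentiable_mult differentiable_sum ballI Rd Fd sPd; simp)+)
    moreover have "G = (\<lambda>y. if j < 2*m then (\<Sum>l<2*m. Rmat m (c * ln (norm y)) j l * F ((1 / norm y) *\<^sub>R y) l) * sin (\<Phi> (norm y))
                       else if j = 2*m then cos (\<Phi> (norm y)) else 0)" using G_def by auto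
    ultimately show ?thesis by simp
  qed
  show "DB (\<lambda>t. G (x + t *\<^sub>R axis i 1)) (S + 1) (K / norm x)"
  proof -
    define ll where "ll t = x + t *\<^sub>R axis i 1" for t
    have l0: "ll 0 = x" by (simp add: ll_def)
    have Dn: "DB (\<lambda>t. norm (ll t)) r 1" unfolding ll_def r_def by (rule DB_norm_line[OF x(1)])
    have DP: "DB (\<lambda>t. \<Phi> (norm (ll t))) \<bar>\<Phi> r\<bar> (M1 * 1)"
      by (rule DB_compose[OF Dn]) (use P1[OF r] M1[OF r] in \<open>simp_all add: l0 r_def\<close>)
    have KM: "M1 \<le> K / r"
    proof -
      have "M1 \<le> M1 / r" using r M10 mult_left_le[of r M1] by (simp add: le_divide_eq)
      also have "\<dots> \<le> K / r" using r S0 M10 unfolding K_def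
        by (intro divide_right_mono) (auto intro!: mult_nonneg_nonneg)
      finally show ?thesis .
    qed
    show ?thesis
    proof (cases "j < 2*m")
      case False
      show ?thesis
      proof (cases "j = 2*m")
        case True
        have "(\<lambda>t. G (x + t *\<^sub>R axis i 1)) = (\<lambda>t. cos (\<Phi> (norm (ll t))))"
          using True by (simp add: G_def ll_def fun_eq_iff)
        then show ?thesis using DB_mono[OF DB_cos[OF DP], of "S + 1" "K / norm x"] KM S0 by (simp add: r_def)
      next
        case False2: False
        have "(\<lambda>t. G (x + t *\<^sub>R axis i 1)) = (\<lambda>t. 0)"
          using False False2 by (simp add: G_def fun_eq_iff)
        moreover have "0 \<le> K / norm x" using r S0 M10 unfolding K_def r_def by (auto intro!: mult_nonneg_nonneg divide_nonneg_pos)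
        ultimately show ?thesis using DB_mono[OF DB_const[of 0], of "S + 1" "K / norm x"] S0 by simp
      qed
    next
      case True
      have DL: "DB (\<lambda>t. c * ln (norm (ll t))) \<bar>c * ln r\<bar> ((\<bar>c\<bar> / r) * 1)"
      proof (rule DB_compose[OF Dn])
        show "((\<lambda>y. c * ln y) has_real_derivative c * (1 / r)) (at (norm (ll 0)))"
          using r by (auto simp: l0 r_def intro!: derivative_eq_intros)
        show "\<bar>c * (1 / r)\<bar> \<le> \<bar>c\<bar> / r" using r by (simp add: abs_mult)
      qed (simp add: l0 r_def)
      define A where "A l = (\<Sum>a\<in>{a. sum a UNIV = k}. \<bar>cf l a\<bar>)" for l
      have DF: "DB (\<lambda>t. F ((1 / norm (ll t)) *\<^sub>R ll t) l) (A l) (A l * (2 * real k) / r)" if "l < 2*m" for l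
        using DB_poly_line[OF x(1), where cf="cf l" and k=k and i=i] cf[OF that] unfolding A_def ll_def r_def by simp
      have DT: "DB (\<lambda>t. Rmat m (c * ln (norm (ll t))) j l * F ((1 / norm (ll t)) *\<^sub>R ll t) l)
                   (1 * A l) (1 * (A l * (2 * real k) / r) + (\<bar>c\<bar> / r * 1) * A l)" if "l < 2*m" for l
        by (rule DB_mult[OF DB_Rmat[OF DL] DF[OF that]])
      have DSum: "DB (\<lambda>t. \<Sum>l<2*m. Rmat m (c * ln (norm (ll t))) j l * F ((1 / norm (ll t)) *\<^sub>R ll t) l)
                   (\<Sum>l<2*m. 1 * A l) (\<Sum>l<2*m. 1 * (A l * (2 * real k) / r) + (\<bar>c\<bar> / r * 1) * A l)"
        by (rule DB_sum[OF finite_lessThan DT]) simp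
      have DAll: "DB (\<lambda>t. (\<Sum>l<2*m. Rmat m (c * ln (norm (ll t))) j l * F ((1 / norm (ll t)) *\<^sub>R ll t) l) * sin (\<Phi> (norm (ll t))))
                   ((\<Sum>l<2*m. 1 * A l) * 1) ((\<Sum>l<2*m. 1 * A l) * (M1 * 1) + (\<Sum>l<2*m. 1 * (A l * (2 * real k) / r) + (\<bar>c\<bar> / r * 1) * A l) * 1)"
        by (rule DB_mult[OF DSum DB_sin[OF DP]])
      have SA: "(\<Sum>l<2*m. 1 * A l) = S" by (simp add: S_def A_def)
      have SB: "(\<Sum>l<2*m. 1 * (A l * (2 * real k) / r) + (\<bar>c\<bar> / r * 1) * A l) = S * (2 * real k + \<bar>c\<bar>) / r"
      proof -
        have "(\<Sum>l<2*m. 1 * (A l * (2 * real k) / r) + (\<bar>c\<bar> / r * 1) * A l) = (\<Sum>l<2*m. A l * ((2 * real k + \<bar>c\<bar>) / r))"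
          by (rule sum.cong) (auto simp: field_simps add_divide_distrib)
        also have "\<dots> = S * ((2 * real k + \<bar>c\<bar>) / r)" unfolding SA[symmetric] sum_distrib_right by simp
        finally show ?thesis by simp
      qed
      have bnd: "S * M1 + S * (2 * real k + \<bar>c\<bar>) / r \<le> K / r"
      proof -
        have "S * M1 \<le> S * M1 / r" using r S0 M10 mult_left_le[of r "S * M1"] by (simp add: le_divide_eq)
        then have "S * M1 + S * (2 * real k + \<bar>c\<bar>) / r \<le> (S * M1 + S * (2 * real k + \<bar>c\<bar>)) / r"
          by (simp add: add_divide_distrib)
        also have "\<dots> \<le> K / r" unfolding K_def using r M10 by (intro divide_right_mono) (auto simp: algebra_simps)
        finally show ?thesis .
      qed
      have "(\<lambda>t. G (x + t *\<^sub>R axis i 1)) = (\<lambda>t. (\<Sum>l<2*m. Rmat m (c * ln (norm (ll t))) j l * F ((1 / norm (ll t)) *\<^sub>R ll t) l) * sin (\<Phi> (norm (ll t))))"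
        using True by (simp add: G_def ll_def fun_eq_iff)
      moreover have "DB (\<lambda>t. (\<Sum>l<2*m. Rmat m (c * ln (norm (ll t))) j l * F ((1 / norm (ll t)) *\<^sub>R ll t) l) * sin (\<Phi> (norm (ll t)))) (S + 1) (K / r)"
        using DB_mono[OF DAll] SA SB bnd by simp
      ultimately show ?thesis by (simp add: r_def)
    qed
  qed
qed



theorem mainTheorem4:
  fixes F :: "real^'n::finite \<Rightarrow> nat \<Rightarrow> real"
    and m k :: nat and \<Phi> :: "real \<Rightarrow> real" and c :: real
    and p :: "nat \<Rightarrow> real" and u uhat :: "real^'n \<Rightarrow> nat \<Rightarrow> real"
  assumes n3: "CARD('n) \<ge> 3"
    and m1: "m \<ge> 1"
    and eig: "eigenmap m k F"
    and C2: "C2_on_unit \<Phi>"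
    and p_sphere: "(\<Sum>j\<le>2*m. (p j)^2) = 1"
    and u_def: "\<And>x. u x = (let r = norm x; g = c * ln r;
                   y = Rapply m g (F ((1 / r) *\<^sub>R x))
                 in (\<lambda>j. if j < 2*m then y j * sin (\<Phi> r)
                         else if j = 2*m then cos (\<Phi> r) else 0))"
    and uhat_def: "\<And>x. uhat x = (if x = 0 then p else u x)"
  shows "sobolev_H12_vec (2*m+1) (ball 0 1) uhat"
proof -
  obtain \<Phi>1 M1 where P1: "\<And>r. 0 < r \<Longrightarrow> r < 1 \<Longrightarrow> (\<Phi> has_real_derivative \<Phi>1 r) (at r)"
    and M1: "\<And>r. 0 < r \<Longrightarrow> r < 1 \<Longrightarrow> \<bar>\<Phi>1 r\<bar> \<le> M1"
    using C2_facts[OF C2] by blast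
  have "\<exists>cf. l < 2*m \<longrightarrow> (\<forall>y. F y l = (\<Sum>a\<in>{a. sum a UNIV = k}. cf a * monomial_fun a y))" for l
  proof (cases "l < 2*m")
    case True
    then have "homog_poly k (\<lambda>x. F x l)" using eig unfolding eigenmap_def by blast
    then show ?thesis unfolding homog_poly_def by blast
  qed simp
  then have "\<forall>l. \<exists>cf. l < 2*m \<longrightarrow> (\<forall>y. F y l = (\<Sum>a\<in>{a. sum a UNIV = k}. cf a * monomial_fun a y))" by blast
  from choice[OF this] obtain cf where cf0: "\<forall>l. l < 2*m \<longrightarrow> (\<forall>y. F y l = (\<Sum>a\<in>{a. sum a UNIV = k}. cf l a * monomial_fun a y))"
    by blast
  have cf: "\<And>l y. l < 2*m \<Longrightarrow> F y l = (\<Sum>a\<in>{a. sum a UNIV = k}. cf l a * monomial_fun a y)"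
    using cf0 by blast
  define S where "S = (\<Sum>l<2*m. \<Sum>a\<in>{a::'n\<Rightarrow>nat. sum a UNIV = k}. \<bar>cf l a\<bar>)"
  define K where "K = S * (M1 + 2 * real k + \<bar>c\<bar>) + M1"
  have S0: "0 \<le> S" unfolding S_def by (intro sum_nonneg) auto
  show ?thesis unfolding sobolev_H12_vec_def
  proof (intro allI impI)
    fix j assume j: "j < 2*m+1"
    define G where "G y = (if j < 2*m then (\<Sum>l<2*m. Rmat m (c * ln (norm y)) j l * F ((1 / norm y) *\<^sub>R y) l) * sin (\<Phi> (norm y))
                       else if j = 2*m then cos (\<Phi> (norm y)) else 0)" for y :: "real^'n"
    have uG: "uhat y j = G y" if "y \<noteq> 0" for y
      using that by (simp add: uhat_def u_def Let_def Rapply_def G_def)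
    note sp = spec_props[OF cf P1 M1 G_def S_def K_def]
    show "sobolev_H12 (ball 0 1) (\<lambda>x. uhat x j)"
    proof (rule sob_generic[OF n3, where B="S + 1" and C=K])
      fix x :: "real^'n" assume xU: "x \<in> ball 0 1"
      show "\<bar>uhat x j\<bar> \<le> S + 1"
      proof (cases "x = 0")
        case True
        have "(p j)^2 \<le> (\<Sum>j\<le>2*m. (p j)^2)" using j by (intro member_le_sum) auto
        then have "(p j)^2 \<le> 1" using p_sphere by simp
        then have "\<bar>p j\<bar> \<le> 1" by (simp add: abs_square_le_1)
        then show ?thesis using True S0 by (simp add: uhat_def)
      next
        case False
        have "DB (\<lambda>t. G (x + t *\<^sub>R axis undefined 1)) (S + 1) (K / norm x)"
          by (rule sp(2)) (use False xU in auto)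
        then show ?thesis using uG[OF False] unfolding DB_def by simp
      qed
    next
      fix x :: "real^'n" assume xU: "x \<in> ball 0 1" and x0: "x \<noteq> 0"
      have Gd: "G differentiable (at x)" by (rule sp(1)) (use x0 xU in auto)
      have eqG: "\<And>y. y \<in> - {0} \<Longrightarrow> uhat y j = G y" using uG by auto
      show "(\<lambda>x. uhat x j) differentiable (at x)"
        by (rule partial_local(1)[of "- {0}" x _ G]) (use x0 eqG Gd in auto)
    next
      fix x :: "real^'n" and i assume xU: "x \<in> ball 0 1" and x0: "x \<noteq> 0"
      have Gd: "G differentiable (at x)" by (rule sp(1)) (use x0 xU in auto)
      have eqG: "\<And>y. y \<in> - {0} \<Longrightarrow> uhat y j = G y" using uG by auto
      have pe: "partial i (\<lambda>x. uhat x j) x = partial i G x"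
        by (rule partial_local(2)[of "- {0}" x _ G]) (use x0 eqG Gd in auto)
      have "DB (\<lambda>t. G (x + t *\<^sub>R axis i 1)) (S + 1) (K / norm x)"
        by (rule sp(2)) (use x0 xU in auto)
      then obtain D where D: "((\<lambda>t. G (x + t *\<^sub>R axis i 1)) has_real_derivative D) (at 0)" "\<bar>D\<bar> \<le> K / norm x"
        unfolding DB_def by blast
      have "(G has_derivative frechet_derivative G (at x)) (at (x + 0 *\<^sub>R axis i 1))"
        using Gd by (simp only: frechet_derivative_works scaleR_zero_left add_0_right)
      from line_deriv[OF this]
      have "((\<lambda>t. G (x + t *\<^sub>R axis i 1)) has_real_derivative partial i G x) (at 0)"
        by (simp add: partial_def)
      with D(1) have "D = partial i G x" by (rule DERIV_unique)
      then show "\<bar>partial i (\<lambda>x. uhat x j) x\<bar> \<le> K / norm x" using pe D(2) by simp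
    qed
  qed
qed


end
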